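(* Let $\mathbb{S}=\mathbb{R}/2\pi\mathbb{Z}$ and, for $t\in\mathbb{S}$, let $$U_3(t)=\bigl(\cos t,\ \sin t,\ \cos 3t,\ \sin 3t,\ \cos 5t,\ \sin 5t\bigr)\in\mathbb{R}^6.$$ For a non-negative integer $m$, define $\Psi_m:\mathbb{S}\to\mathbb{R}^{6(m+1)}$ by $$\Psi_m(t)=\bigl(U_3(t),\ U_3(3t),\ \ldots,\ U_3(3^m t)\bigr).$$ Let $A_m\subset\mathbb{S}$ be the set of $4\cdot 3^{m+1}$ equally spaced points $$A_m=\left\{\frac{2\pi j}{4\cdot 3^{m+1}}:\ j=0,\ldots,4\cdot 3^{m+1}-1\right\},$$ and let $P_m=\operatorname{conv}\bigl(\Psi_m(t):\ t\in A_m\bigr)$. Then $P_m$ is a centrally symmetric polytope (i.e. $P_m=-P_m$) of dimension $d=4m+6$ that has exactly $4\cdot 3^{m+1}$ vertices, namely the points $\Psi_m(t)$ for $t\in A_m$. Moreover, for $t_1,t_2\in A_m$ with $t_1\neq t_2$ and $t_1\neq t_2+\pi \pmod{2\pi}$, the segment $[\Psi_m(t_1),\Psi_m(t_2)]$ is an edge of $P_m$.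
   Context: A polytope is the convex hull of finitely many points in $\mathbb{R}^d$. A face of a convex body is its intersection with a supporting affine hyperplane; an edge is a one-dimensional face. The dimension of a polytope is the dimension of its affine hull. *)

theory Defs
  imports "HOL-Analysis.Analysis"
begin

definition U3_coord :: "nat \<Rightarrow> real \<Rightarrow> real" where
  "U3_coord r s =
     (if r = 0 then cos s else if r = 1 then sin s
      else if r = 2 then cos (3 * s) else if r = 3 then sin (3 * s)
      else if r = 4 then cos (5 * s) else sin (5 * s))"

definition Psi_coord :: "nat \<Rightarrow> real \<Rightarrow> real" where
  "Psi_coord k t = U3_coord (k mod 6) (3 ^ (k div 6) * t)"

text \<open>Psi_m realised in a Euclidean space indexed by a finite type 'n, via a
  coordinate enumeration idx : 'n -> {0..<6(m+1)}.\<close>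
definition Psi :: "('n::finite \<Rightarrow> nat) \<Rightarrow> real \<Rightarrow> real ^ 'n" where
  "Psi idx t = (\<chi> i. Psi_coord (idx i) t)"

definition A_set :: "nat \<Rightarrow> real set" where
  "A_set m = {2 * pi * real j / real (4 * 3 ^ (m + 1)) | j. j < 4 * 3 ^ (m + 1)}"

end

theory Submission
  imports Defs
begin

definition trigm :: "nat \<Rightarrow> (real \<Rightarrow> real) \<Rightarrow> bool" where
  "trigm m f \<longleftrightarrow> (\<exists>c \<beta>. \<forall>t. f t = \<beta> + (\<Sum>k<6 * (m+1). c k * Psi_coord k t))"

lemma cos_per: "cos (x + 2 * pi * of_int (n::int)) = cos x"
  by (simp add: cos_add)
lemma sin_per: "sin (x + 2 * pi * of_int (n::int)) = sin x"
  by (simp add: sin_add)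

lemma U3_per: "U3_coord r (s + 2 * pi * of_int (n::int)) = U3_coord r s"
proof -
  have a: "3 * (s + 2 * pi * of_int n) = 3 * s + 2 * pi * of_int (3 * n)" by (simp add: algebra_simps)
  have b: "5 * (s + 2 * pi * of_int n) = 5 * s + 2 * pi * of_int (5 * n)" by (simp add: algebra_simps)
  show ?thesis unfolding U3_coord_def a b cos_per sin_per by simp
qed

lemma Psi_coord_per: "Psi_coord k (t + 2 * pi * of_int (n::int)) = Psi_coord k t"
proof -
  have "3 ^ (k div 6) * (t + 2 * pi * of_int n) = 3 ^ (k div 6) * t + 2 * pi * of_int (3^(k div 6) * n)"
    by (simp add: algebra_simps)
  then show ?thesis unfolding Psi_coord_def
    using U3_per[of "k mod 6" "3^(k div 6) * t" "3^(k div 6) * n"] by simp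
qed

lemma trigm_periodic: "trigm m f \<Longrightarrow> f (t + 2 * pi * of_int (n::int)) = f t"
  unfolding trigm_def by (auto simp: Psi_coord_per)

lemma sum6: "(\<Sum>k<(6::nat). g k) = g 0 + g 1 + g 2 + g 3 + g 4 + (g 5::real)"
proof -
  have e: "{..<6::nat} = {0,1,2,3,4,5}" by auto
  show ?thesis unfolding e by (simp add: add.assoc)
qed

lemma Psi_small: "Psi_coord 0 t = cos t" "Psi_coord 1 t = sin t" "Psi_coord 2 t = cos (3 * t)"
   "Psi_coord 3 t = sin (3 * t)" "Psi_coord 4 t = cos (5 * t)" "Psi_coord 5 t = sin (5 * t)"
  by (simp_all add: Psi_coord_def U3_coord_def)

lemma trigm_lev0: "trigm m (\<lambda>t. b0 + b1 * cos t + b2 * sin t + b3 * cos(3 * t) + b4 * sin(3 * t) + b5 * cos(5 * t) + b6 * sin(5 * t))"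
proof -
  define c where "c = (\<lambda>k::nat. if k=0 then b1 else if k=1 then b2 else if k=2 then b3 else if k=3 then b4
      else if k=4 then b5 else if k = 5 then b6 else 0)"
  have "(\<Sum>k<6 * (m+1). c k * Psi_coord k t) = (\<Sum>k<6. c k * Psi_coord k t)" for t
    by (rule sum.mono_neutral_right) (auto simp: c_def)
  also have "\<dots> t = b1 * cos t + b2 * sin t + b3 * cos(3 * t) + b4 * sin(3 * t) + b5 * cos(5 * t) + b6 * sin(5 * t)" for t
    unfolding sum6 by (simp add: c_def Psi_coord_def U3_coord_def)
  finally show ?thesis unfolding trigm_def
    by (rule_tac x=c in exI, rule_tac x=b0 in exI) (simp add: algebra_simps)
qed

lemma trigm_add: "trigm m f \<Longrightarrow> trigm m g \<Longrightarrow> trigm m (\<lambda>t. f t + e * g t)"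
  unfolding trigm_def
proof (elim exE)
  fix c \<beta> c' \<beta>'
  assume f: "\<forall>t. f t = \<beta> + (\<Sum>k<6 * (m + 1). c k * Psi_coord k t)"
    and g: "\<forall>t. g t = \<beta>' + (\<Sum>k<6 * (m + 1). c' k * Psi_coord k t)"
  show "\<exists>c \<beta>. \<forall>t. f t + e * g t = \<beta> + (\<Sum>k<6 * (m + 1). c k * Psi_coord k t)"
    by (rule exI[of _ "\<lambda>k. c k + e * c' k"], rule exI[of _ "\<beta> + e*\<beta>'"])
      (simp add: f g algebra_simps sum.distrib sum_distrib_left)
qed

lemma Psi_coord_shift: "Psi_coord (k+6) t = Psi_coord k (3 * t)"
  unfolding Psi_coord_def by (simp add: algebra_simps)

lemma trigm_shift: assumes "trigm m F" shows "trigm (Suc m) (\<lambda>t. F (3 * t))"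
proof -
  from assms obtain c \<beta> where F: "\<And>t. F t = \<beta> + (\<Sum>k<6 * (m+1). c k * Psi_coord k t)"
    unfolding trigm_def by blast
  define c' where "c' = (\<lambda>k. if k < 6 then 0 else c (k - 6))"
  have "(\<Sum>k<6 * (Suc m+1). c' k * Psi_coord k t) = (\<Sum>k<6 * (m+1). c k * Psi_coord k (3 * t))" for t
  proof -
    have e: "{..<6 * (Suc m+1)} = {..<6} \<union> {6..<6 * (m+1)+6}" by auto
    have "(\<Sum>k<6 * (Suc m+1). c' k * Psi_coord k t) = (\<Sum>k<6. c' k * Psi_coord k t) + (\<Sum>k\<in>{6..<6 * (m+1)+6}. c' k * Psi_coord k t)"
      unfolding e by (rule sum.union_disjoint) auto
    also have "(\<Sum>k<6. c' k * Psi_coord k t) = 0" by (simp add: c'_def)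
    finally have "(\<Sum>k<6 * (Suc m+1). c' k * Psi_coord k t) = (\<Sum>k\<in>{0+6..<6 * (m+1)+6}. c' k * Psi_coord k t)"
      by simp
    also have "\<dots> = (\<Sum>k\<in>{0..<6 * (m+1)}. c' (k+6) * Psi_coord (k+6) t)"
      by (rule sum.shift_bounds_nat_ivl)
    also have "\<dots> = (\<Sum>k<6 * (m+1). c k * Psi_coord k (3 * t))"
      by (simp add: c'_def Psi_coord_shift atLeast0LessThan)
    finally show ?thesis .
  qed
  then show ?thesis unfolding trigm_def
    by (rule_tac x=c' in exI, rule_tac x=\<beta> in exI) (simp add: F)
qed

lemma trigm_vec:
  fixes idx :: "'n::finite \<Rightarrow> nat"
  assumes bij: "bij_betw idx UNIV {..<6 * (m+1)}" and "trigm m f"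
  shows "\<exists>a \<beta>. \<forall>t. f t = \<beta> + a \<bullet> Psi idx t"
proof -
  from assms(2) obtain c \<beta> where F: "\<And>t. f t = \<beta> + (\<Sum>k<6 * (m+1). c k * Psi_coord k t)"
    unfolding trigm_def by blast
  have "(\<chi> i. c (idx i)) \<bullet> Psi idx t = (\<Sum>k<6 * (m+1). c k * Psi_coord k t)" for t
    unfolding inner_vec_def Psi_def
    using sum.reindex_bij_betw[OF bij, of "\<lambda>k. c k * Psi_coord k t"] by simp
  then show ?thesis using F by metis
qed

definition NN :: "nat \<Rightarrow> int" where "NN m = 4 * 3 ^ (m + 1)"
definition th :: "nat \<Rightarrow> int \<Rightarrow> real" where "th m j = 2 * pi * of_int j / of_int (NN m)"
definition good :: "nat \<Rightarrow> int \<Rightarrow> int \<Rightarrow> (real \<Rightarrow> real) \<Rightarrow> bool" where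
  "good m j1 j2 f \<longleftrightarrow> trigm m f \<and> (\<forall>j. f (th m j) \<ge> 0) \<and>
     (\<forall>j. f (th m j) = 0 \<longleftrightarrow> NN m dvd (j - j1) \<or> NN m dvd (j - j2))"

lemma NN_pos: "NN m > 0" by (simp add: NN_def)
lemma NN_eq: "NN m = 3 * (4 * 3 ^ m)" by (simp add: NN_def)
lemma NN_Suc: "NN (Suc m) = 3 * NN m" by (simp add: NN_def)
lemma th_Suc: "3 * th (Suc m) j = th m j"
  unfolding th_def NN_Suc by (simp add: field_simps)
lemma th_period: "th m (j + NN m) = th m j + 2 * pi * of_int (1::int)"
  using NN_pos[of m] unfolding th_def by (simp add: field_simps)

lemma per_mod:
  fixes a :: "int \<Rightarrow> real" and N :: int
  assumes "N > 0" "\<forall>j. a (j + N) = a j"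
  shows "a j = a (j mod N)"
proof -
  have k: "a (i + N * int k) = a i" for i k
  proof (induction k)
    case (Suc k)
    have "a (i + N * int (Suc k)) = a ((i + N * int k) + N)" by (simp add: algebra_simps)
    also have "\<dots> = a (i + N * int k)" by (rule assms(2)[rule_format])
    finally show ?case using Suc by simp
  qed simp
  show ?thesis
  proof (cases "j div N \<ge> 0")
    case True
    then obtain k where "j div N = int k" by (metis nonneg_int_cases)
    then have "j = j mod N + N * int k" by (metis mult_div_mod_eq add.commute)
    then show ?thesis using k by metis
  next
    case False
    then obtain k where "- (j div N) = int k" by (metis neg_0_less_iff_less not_le order_less_imp_le nonneg_int_cases)
    then have "j mod N = j + N * int k" by (metis minus_div_mult_eq_mod mult.commute add_uminus_conv_diff mult_minus_right)
    then show ?thesis using k by metis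
  qed
qed

lemma eps_lemma:
  fixes a b :: "int \<Rightarrow> real" and N :: int
  assumes N: "N > 0" and pa: "\<forall>j. a (j + N) = a j" and pb: "\<forall>j. b (j + N) = b j"
    and a0: "\<forall>j. a j \<ge> 0" and ab: "\<forall>j. a j = 0 \<longrightarrow> b j \<ge> 0"
  shows "\<exists>\<epsilon>>0. \<forall>j. a j + \<epsilon> * b j \<ge> 0 \<and> (a j + \<epsilon> * b j = 0 \<longleftrightarrow> a j = 0 \<and> b j = 0)"
proof -
  define W where "W = (\<lambda>j. a j / (\<bar>b j\<bar> + 1)) ` {j \<in> {0..<N}. a j > 0}"
  define V where "V = insert 1 W"
  have "finite {j \<in> {0..<N}. a j > 0}" by (rule finite_subset[of _ "{0..<N}"]) auto
  then have finW: "finite W" unfolding W_def by (rule finite_imageI)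
  have fin: "finite V" unfolding V_def using finW by simp
  define \<epsilon> where "\<epsilon> = Min V"
  have Wpos: "\<forall>v\<in>W. v > 0" unfolding W_def
  proof
    fix v assume "v \<in> (\<lambda>j. a j / (\<bar>b j\<bar> + 1)) ` {j \<in> {0..<N}. a j > 0}"
    then obtain j where "a j > 0" "v = a j / (\<bar>b j\<bar> + 1)" by blast
    moreover have "\<bar>b j\<bar> + 1 > 0" by (simp add: add_nonneg_pos)
    ultimately show "v > 0" by simp
  qed
  have Vpos: "\<forall>v\<in>V. v > 0" unfolding V_def using Wpos by simp
  have "V \<noteq> {}" unfolding V_def by simp
  then have "\<epsilon> \<in> V" unfolding \<epsilon>_def using fin by (rule_tac Min_in)
  then have epos: "\<epsilon> > 0" using Vpos by simp
  have main: "a j + \<epsilon> * b j > 0" if "a j > 0" for j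
  proof -
    define j' where "j' = j mod N"
    have aj: "a j' = a j" unfolding j'_def by (rule per_mod[OF N pa, symmetric])
    have bj: "b j' = b j" unfolding j'_def by (rule per_mod[OF N pb, symmetric])
    have "j' \<in> {0..<N}" using N unfolding j'_def by simp
    then have "j' \<in> {j \<in> {0..<N}. a j > 0}" using that aj by simp
    then have "a j' / (\<bar>b j'\<bar> + 1) \<in> W" unfolding W_def by (rule imageI)
    then have "a j / (\<bar>b j\<bar> + 1) \<in> W" by (simp only: aj bj)
    then have "a j / (\<bar>b j\<bar> + 1) \<in> V" unfolding V_def by (rule insertI2)
    then have "\<epsilon> \<le> a j / (\<bar>b j\<bar> + 1)" unfolding \<epsilon>_def by (rule Min_le[OF fin])
    moreover have "\<bar>b j\<bar> + 1 > 0" by (simp add: add_nonneg_pos)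
    ultimately have "\<epsilon> * (\<bar>b j\<bar> + 1) \<le> a j"
      by (simp add: le_divide_eq)
    then have "\<epsilon> * \<bar>b j\<bar> < a j" using epos by (simp add: algebra_simps)
    moreover have "- (\<epsilon> * \<bar>b j\<bar>) \<le> \<epsilon> * b j" 
      using mult_left_mono[OF abs_ge_minus_self[of "b j"], of \<epsilon>] epos by simp
    ultimately show ?thesis by linarith
  qed
  have "a j + \<epsilon> * b j \<ge> 0 \<and> (a j + \<epsilon> * b j = 0 \<longleftrightarrow> a j = 0 \<and> b j = 0)" for j
  proof (cases "a j > 0")
    case True
    then show ?thesis using main[of j] by simp
  next
    case False
    then have "a j = 0" using a0[rule_format, of j] by linarith
    then have "b j \<ge> 0" using ab by simp
    then show ?thesis using \<open>a j = 0\<close> epos by simp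
  qed
  then show ?thesis using epos by (intro exI[of _ \<epsilon>]) simp
qed

lemma grid_int:
  assumes "(N::int) > 0"
  shows "(\<exists>n\<in>\<int>. 2 * pi * of_int x / of_int N = 2 * n * pi) \<longleftrightarrow> N dvd x"
proof
  assume "\<exists>n\<in>\<int>. 2 * pi * of_int x / of_int N = 2 * n * pi"
  then obtain k :: int where "2 * pi * of_int x / of_int N = 2 * of_int k * pi" by (auto elim!: Ints_cases)
  then have "of_int x = (of_int (k * N) :: real)" using assms pi_gt_zero
    by (simp add: field_simps)
  then have "x = k * N" by (simp only: of_int_eq_iff)
  then show "N dvd x" by simp
next
  assume "N dvd x"
  then obtain k where "x = N * k" by blast
  then show "\<exists>n\<in>\<int>. 2 * pi * of_int x / of_int N = 2 * n * pi" using assms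
    by (intro bexI[of _ "of_int k"]) (auto simp: field_simps)
qed

lemma cos_grid:
  assumes "(N::int) > 0"
  shows "cos (2 * pi * of_int j / of_int N - (2 * pi * of_int j1 / of_int N + pi * of_int e / of_int N))
          = cos (pi * of_int e / of_int N) \<longleftrightarrow> N dvd (j - j1 - e) \<or> N dvd (j - j1)"
proof -
  let ?X = "2 * pi * of_int j / of_int N - (2 * pi * of_int j1 / of_int N + pi * of_int e / of_int N)"
  let ?Y = "pi * of_int e / of_int N"
  have Nz: "real_of_int N \<noteq> 0" using assms by simp
  have d1: "?X - ?Y = 2 * pi * of_int (j - j1 - e) / of_int N" using Nz by (simp add: field_simps)
  have d2: "?X + ?Y = 2 * pi * of_int (j - j1) / of_int N" using Nz by (simp add: field_simps)
  have "cos ?X = cos ?Y \<longleftrightarrow> (\<exists>n\<in>\<int>. ?X = ?Y + 2 * n * pi \<or> ?X = - ?Y + 2 * n * pi)"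
    by (rule cos_eq)
  also have "\<dots> \<longleftrightarrow> (\<exists>n\<in>\<int>. 2 * pi * of_int (j - j1 - e) / of_int N = 2 * n * pi)
      \<or> (\<exists>n\<in>\<int>. 2 * pi * of_int (j - j1) / of_int N = 2 * n * pi)"
    unfolding d1[symmetric] d2[symmetric] by (auto simp: algebra_simps)
  also have "\<dots> \<longleftrightarrow> N dvd (j - j1 - e) \<or> N dvd (j - j1)" by (simp only: grid_int[OF assms])
  finally show ?thesis .
qed

lemma caseA:
  assumes e0: "0 < e" and e3: "3 * e < NN m"
  shows "\<exists>f. good m j1 (j1 + e) f"
proof -
  define N where "N = NN m"
  have N: "N > 0" using NN_pos N_def by simp
  define \<delta> where "\<delta> = pi * of_int e / of_int N"
  define c where "c = th m j1 + \<delta>"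
  define x0 where "x0 = cos \<delta>"
  have d0: "0 < \<delta>" using e0 N by (simp add: \<delta>_def)
  have d3: "\<delta> < pi / 3" using e3 N unfolding \<delta>_def N_def[symmetric]
    by (simp add: field_simps)
  have x0: "x0 > 1/2" unfolding x0_def using cos_monotone_0_pi[of \<delta> "pi/3"] d0 d3 cos_60 by simp
  define f where "f t = cos (3 * (t - c)) + (3 - 12 * x0^2) * cos (t - c) + 8 * x0^3" for t
  have fac: "f t = 4 * (cos (t - c) - x0)^2 * (cos (t - c) + 2 * x0)" for t
    unfolding f_def cos_treble_cos by (simp add: power2_eq_square power3_eq_cube algebra_simps)
  have pos: "cos (t - c) + 2 * x0 > 0" for t using cos_ge_minus_one[of "t - c"] x0 by linarith
  have fnn: "f t \<ge> 0" for t unfolding fac using pos[of t] by simp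
  have fz: "f t = 0 \<longleftrightarrow> cos (t - c) = x0" for t unfolding fac using pos[of t] by simp
  have "trigm m (\<lambda>t. 8 * x0^3 + ((3 - 12 * x0^2) * cos c) * cos t + ((3 - 12 * x0^2) * sin c) * sin t
       + cos (3 * c) * cos (3 * t) + sin (3 * c) * sin (3 * t) + 0 * cos (5 * t) + 0 * sin (5 * t))"
    by (rule trigm_lev0)
  moreover have "(\<lambda>t. 8 * x0^3 + ((3 - 12 * x0^2) * cos c) * cos t + ((3 - 12 * x0^2) * sin c) * sin t
       + cos (3 * c) * cos (3 * t) + sin (3 * c) * sin (3 * t) + 0 * cos (5 * t) + 0 * sin (5 * t)) = f"
    unfolding f_def by (rule ext) (simp add: right_diff_distrib cos_diff algebra_simps)
  ultimately have tf: "trigm m f" by simp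
  have "f (th m j) = 0 \<longleftrightarrow> NN m dvd (j - j1) \<or> NN m dvd (j - (j1 + e))" for j
  proof -
    have "f (th m j) = 0 \<longleftrightarrow> cos (th m j - c) = cos \<delta>" using fz x0_def by simp
    also have "\<dots> \<longleftrightarrow> N dvd (j - j1 - e) \<or> N dvd (j - j1)"
      unfolding c_def th_def \<delta>_def N_def[symmetric] by (rule cos_grid[OF N])
    finally show ?thesis unfolding N_def by (auto simp: algebra_simps)
  qed
  then show ?thesis unfolding good_def using tf fnn by blast
qed


lemma cos_grid1:
  assumes "(N::int) > 0"
  shows "cos (2 * pi * of_int x / of_int N) = 1 \<longleftrightarrow> N dvd x"
proof -
  have "cos (2 * pi * of_int x / of_int N) = 1 \<longleftrightarrow> (\<exists>n::int. 2 * pi * of_int x / of_int N = of_int n * 2 * pi)"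
    by (rule cos_one_2pi_int)
  also have "\<dots> \<longleftrightarrow> (\<exists>n\<in>\<int>. 2 * pi * of_int x / of_int N = 2 * n * pi)"
    by (auto simp: algebra_simps elim!: Ints_cases)
  also have "\<dots> \<longleftrightarrow> N dvd x" by (rule grid_int[OF assms])
  finally show ?thesis .
qed

lemma cos3: "cos (2 * pi * of_int r / 3) = 1 \<longleftrightarrow> 3 dvd (r::int)"
  using cos_grid1[of 3 r] by simp

lemma dvd_shift: "(N::int) dvd (a - b) \<Longrightarrow> N dvd (x - a) \<longleftrightarrow> N dvd (x - b)"
proof -
  assume h: "N dvd (a - b)"
  have e: "(a - b) + (x - a) = x - b" by simp
  show ?thesis using dvd_add_right_iff[OF h, of "x - a"] unfolding e by simp
qed

lemma good_cong: "good m j1 j2 f \<Longrightarrow> NN m dvd (j1 - j1') \<Longrightarrow> NN m dvd (j2 - j2') \<Longrightarrow> good m j1' j2' f"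
  unfolding good_def using dvd_shift by metis

lemma good_swap: "good m j1 j2 f \<Longrightarrow> good m j2 j1 f"
  unfolding good_def by auto

lemma Kval:
  fixes \<delta> :: real and r :: int
  defines "\<rho> \<equiv> 2 * pi * of_int r / 3"
  shows "sin (6 * \<delta>) - sin (5 * \<delta>) * cos (\<rho> - \<delta>) - sin \<delta> * cos (5 * (\<rho> - \<delta>)) = sin (6 * \<delta>) * (1 - cos \<rho>)"
    and "sin (6 * \<delta>) - sin (5 * \<delta>) * cos (\<delta> + \<rho>) - sin \<delta> * cos (5 * (\<delta> + \<rho>)) = sin (6 * \<delta>) * (1 - cos \<rho>)"
proof -
  have a1: "5 * (\<rho> - \<delta>) = - (5 * \<delta> + \<rho>) + 2 * pi * of_int (2 * r)" unfolding \<rho>_def by (simp add: field_simps)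
  have c5: "cos (5 * (\<rho> - \<delta>)) = cos (5 * \<delta> + \<rho>)" unfolding a1 cos_per cos_minus ..
  have a2: "5 * (\<delta> + \<rho>) = (5 * \<delta> - \<rho>) + 2 * pi * of_int (2 * r)" unfolding \<rho>_def by (simp add: field_simps)
  have c5': "cos (5 * (\<delta> + \<rho>)) = cos (5 * \<delta> - \<rho>)" unfolding a2 cos_per ..
  have s6: "sin (6 * \<delta>) = sin (5 * \<delta>) * cos \<delta> + cos (5 * \<delta>) * sin \<delta>"
    using sin_add[of "5 * \<delta>" \<delta>] by (simp add: algebra_simps)
  show "sin (6 * \<delta>) - sin (5 * \<delta>) * cos (\<rho> - \<delta>) - sin \<delta> * cos (5 * (\<rho> - \<delta>)) = sin (6 * \<delta>) * (1 - cos \<rho>)"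
    unfolding c5 cos_add cos_diff s6 by (simp add: algebra_simps)
  show "sin (6 * \<delta>) - sin (5 * \<delta>) * cos (\<delta> + \<rho>) - sin \<delta> * cos (5 * (\<delta> + \<rho>)) = sin (6 * \<delta>) * (1 - cos \<rho>)"
    unfolding c5' cos_add cos_diff s6 by (simp add: algebra_simps)
qed

lemma th_coset:
  assumes "NN m = 3 * M" "j - j1 = M * r"
  shows "th m j - (th m j1 + \<delta>) = 2 * pi * of_int r / 3 - \<delta>"
proof -
  have M: "real_of_int M \<noteq> 0" using NN_pos[of m] assms(1) by auto
  have "real_of_int j = of_int j1 + of_int M * of_int r" using assms(2) by (simp add: algebra_simps flip: of_int_mult of_int_add)
  then show ?thesis unfolding th_def assms(1) using M by (simp add: field_simps)
qed

lemma th_coset2: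
  assumes "NN m = 3 * M" "j - j1 - e = M * r" "\<delta> = pi * of_int e / of_int (NN m)"
  shows "th m j - (th m j1 + \<delta>) = \<delta> + 2 * pi * of_int r / 3"
proof -
  have M: "real_of_int M \<noteq> 0" using NN_pos[of m] assms(1) by auto
  have "real_of_int j = of_int j1 + of_int e + of_int M * of_int r" using assms(2) by (simp add: algebra_simps flip: of_int_mult of_int_add)
  then show ?thesis unfolding th_def assms(3) assms(1) using M by (simp add: field_simps)
qed

lemma notdvd1:
  fixes M e :: int
  assumes "0 < M" "M < e" "2 * e < 3 * M"
  shows "\<not> M dvd e"
proof
  assume "M dvd e"
  then obtain s where s: "e = M * s" by blast
  have "M * 1 < M * s" using assms s by simp
  then have "1 < s" using assms(1) by (simp only: mult_less_cancel_left_pos)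
  have "M * (2 * s) < M * 3" using assms s by (simp add: algebra_simps)
  then have "2 * s < 3" using assms(1) by (simp only: mult_less_cancel_left_pos)
  with \<open>1 < s\<close> show False by linarith
qed

lemma Bval:
  fixes r :: int
  shows "1/2 - cos (2 * pi * of_int r / 3 - pi / 3) \<ge> 0 \<and>
    (1/2 - cos (2 * pi * of_int r / 3 - pi / 3) = 0 \<longleftrightarrow> 3 dvd r \<or> 3 dvd (r - 1))"
proof -
  define q where "q = r div 3"
  define i where "i = r mod 3"
  have r: "r = 3 * q + i" unfolding q_def i_def by simp
  have i: "i = 0 \<or> i = 1 \<or> i = 2" unfolding i_def by auto
  have arg: "2 * pi * of_int r / 3 - pi / 3 = (2 * pi * of_int i / 3 - pi / 3) + 2 * pi * of_int q"
    unfolding r by (simp add: field_simps)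
  have cv: "cos (2 * pi * of_int r / 3 - pi / 3) = cos (2 * pi * of_int i / 3 - pi / 3)"
    unfolding arg cos_per ..
  have d3: "3 dvd r \<longleftrightarrow> i = 0" "3 dvd (r - 1) \<longleftrightarrow> i = 1" unfolding i_def by presburger+
  show ?thesis
  proof -
    { assume "i = 0"
      then have "cos (2 * pi * of_int i / 3 - pi / 3) = 1/2" using cos_60 by simp }
    moreover
    { assume "i = 1"
      then have "2 * pi * of_int i / 3 - pi / 3 = pi / 3" by simp
      then have "cos (2 * pi * of_int i / 3 - pi / 3) = 1/2" using cos_60 by simp }
    moreover
    { assume "i = 2"
      then have "2 * pi * of_int i / 3 - pi / 3 = pi" by simp
      then have "cos (2 * pi * of_int i / 3 - pi / 3) = -1" by simp }
    ultimately show ?thesis unfolding cv d3 using i by auto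
  qed
qed

lemma Q4val:
  fixes x :: int
  shows "1 - cos (pi * of_int x / 2) - sin (pi * of_int x / 2) \<ge> 0 \<and>
    (1 - cos (pi * of_int x / 2) - sin (pi * of_int x / 2) = 0 \<longleftrightarrow> 4 dvd x \<or> 4 dvd (x - 1))"
proof -
  define q where "q = x div 4"
  define i where "i = x mod 4"
  have r: "x = 4 * q + i" unfolding q_def i_def by simp
  have i: "i = 0 \<or> i = 1 \<or> i = 2 \<or> i = 3" unfolding i_def by auto
  have arg: "pi * of_int x / 2 = pi * of_int i / 2 + 2 * pi * of_int q"
    unfolding r by (simp add: field_simps)
  have cv: "cos (pi * of_int x / 2) = cos (pi * of_int i / 2)" "sin (pi * of_int x / 2) = sin (pi * of_int i / 2)"
    unfolding arg cos_per sin_per by auto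
  have d3: "4 dvd x \<longleftrightarrow> i = 0" "4 dvd (x - 1) \<longleftrightarrow> i = 1" unfolding i_def by presburger+
  have v3: "3 * pi / 2 = pi / 2 + pi" by simp
  have c3: "cos (3 * pi / 2) = 0" "sin (3 * pi / 2) = -1" unfolding v3 cos_periodic_pi sin_periodic_pi by simp_all
  show ?thesis
  proof -
    { assume "i = 0"
      then have "1 - cos (pi * of_int i / 2) - sin (pi * of_int i / 2) = 0" by simp }
    moreover
    { assume "i = 1"
      then have "1 - cos (pi * of_int i / 2) - sin (pi * of_int i / 2) = 0" by simp }
    moreover
    { assume "i = 2"
      then have "1 - cos (pi * of_int i / 2) - sin (pi * of_int i / 2) = 2" by simp }
    moreover
    { assume "i = 3"
      then have ee: "pi * of_int i / 2 = pi / 2 + pi" by simp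
      have "1 - cos (pi * of_int i / 2) - sin (pi * of_int i / 2) = 2"
        unfolding ee cos_periodic_pi sin_periodic_pi by simp }
    ultimately show ?thesis unfolding cv d3 using i by auto
  qed
qed

definition Fprop :: "nat \<Rightarrow> int \<Rightarrow> int \<Rightarrow> bool" where
  "Fprop m j1 e \<longleftrightarrow> (\<exists>F. trigm m (\<lambda>t. F (3 * t)) \<and> (\<forall>j. F (3 * th m j) \<ge> 0) \<and>
     (\<forall>j. F (3 * th m j) = 0 \<longleftrightarrow> NN m dvd 3 * (j - j1) \<or> NN m dvd 3 * (j - j1 - e)))"

lemma trigm_periodic1: "trigm m f \<Longrightarrow> f (t + 2 * pi) = f t"
  using trigm_periodic[of m f t 1] by simp

lemma th_period1: "th m (j + NN m) = th m j + 2 * pi"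
  using th_period[of m j] by simp

lemma dvd3: "(3 * M) dvd (3 * x) \<longleftrightarrow> M dvd (x::int)"
  by (rule dvd_times_left_cancel_iff) simp

lemma combine:
  assumes tG: "trigm m G" and tk: "trigm m k"
    and Gnn: "\<forall>j. G (th m j) \<ge> 0"
    and ab: "\<forall>j. G (th m j) = 0 \<longrightarrow> k (th m j) \<ge> 0"
    and z: "\<forall>j. (G (th m j) = 0 \<and> k (th m j) = 0) \<longleftrightarrow> NN m dvd (j - j1) \<or> NN m dvd (j - j2)"
  shows "\<exists>f. good m j1 j2 f"
proof -
  have pa: "\<forall>j. G (th m (j + NN m)) = G (th m j)"
    unfolding th_period1 trigm_periodic1[OF tG] by simp
  have pb: "\<forall>j. k (th m (j + NN m)) = k (th m j)"
    unfolding th_period1 trigm_periodic1[OF tk] by simp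
  obtain \<epsilon> where epE: "\<epsilon> > 0 \<and> (\<forall>j. G (th m j) + \<epsilon> * k (th m j) \<ge> 0 \<and>
      (G (th m j) + \<epsilon> * k (th m j) = 0 \<longleftrightarrow> G (th m j) = 0 \<and> k (th m j) = 0))"
    using eps_lemma[of "NN m" "\<lambda>j. G (th m j)" "\<lambda>j. k (th m j)", OF NN_pos pa pb Gnn ab] by (rule exE)
  note E = conjunct2[OF epE]
  have "good m j1 j2 (\<lambda>t. G t + \<epsilon> * k t)"
    unfolding good_def using trigm_add[OF tG tk] E z by simp
  then show ?thesis by blast
qed

lemma dvd3M: "M \<noteq> 0 \<Longrightarrow> (3 * M) dvd (M * r) \<longleftrightarrow> 3 dvd (r::int)"
  by (metis dvd_mult_cancel_right mult.commute)

lemma caseB: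
  assumes e3: "3 * e = NN m"
  shows "\<exists>f. good m j1 (j1 + e) f"
proof -
  define M :: int where "M = 4 * 3 ^ m"
  have NM: "NN m = 3 * M" unfolding M_def by (rule NN_eq)
  have M0: "M > 0" unfolding M_def by simp
  have eM: "e = M" using e3 NM by simp
  define c1 where "c1 = th m j1"
  define G where "G t = 1 - cos (3 * t - 3 * c1)" for t
  define k where "k t = 1/2 - cos (t - (c1 + pi / 3))" for t
  have "trigm m (\<lambda>t. 1 + 0 * cos t + 0 * sin t + (- cos (3 * c1)) * cos (3 * t) + (- sin (3 * c1)) * sin (3 * t)
      + 0 * cos (5 * t) + 0 * sin (5 * t))" by (rule trigm_lev0)
  moreover have "(\<lambda>t. 1 + 0 * cos t + 0 * sin t + (- cos (3 * c1)) * cos (3 * t) + (- sin (3 * c1)) * sin (3 * t)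
      + 0 * cos (5 * t) + 0 * sin (5 * t)) = G"
    unfolding G_def by (rule ext) (simp add: cos_diff algebra_simps)
  ultimately have tG: "trigm m G" by simp
  have "trigm m (\<lambda>t. 1/2 + (- cos (c1 + pi / 3)) * cos t + (- sin (c1 + pi / 3)) * sin t + 0 * cos (3 * t) + 0 * sin (3 * t)
      + 0 * cos (5 * t) + 0 * sin (5 * t))" by (rule trigm_lev0)
  moreover have "(\<lambda>t. 1/2 + (- cos (c1 + pi / 3)) * cos t + (- sin (c1 + pi / 3)) * sin t + 0 * cos (3 * t) + 0 * sin (3 * t)
      + 0 * cos (5 * t) + 0 * sin (5 * t)) = k"
    unfolding k_def by (rule ext) (simp add: cos_diff[of _ "c1 + pi / 3"] algebra_simps)
  ultimately have tk: "trigm m k" by simp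
  have Gj: "G (th m j) = 1 - cos (2 * pi * of_int (3 * (j - j1)) / of_int (NN m))" for j
    unfolding G_def c1_def th_def using NN_pos[of m] by (simp add: field_simps)
  have Gnn: "\<forall>j. G (th m j) \<ge> 0" unfolding Gj by simp
  have Gz: "G (th m j) = 0 \<longleftrightarrow> M dvd (j - j1)" for j
  proof -
    have "G (th m j) = 0 \<longleftrightarrow> NN m dvd (3 * (j - j1))" unfolding Gj right_minus_eq eq_commute[of 1]
      by (rule cos_grid1[OF NN_pos])
    also have "\<dots> \<longleftrightarrow> M dvd (j - j1)" unfolding NM dvd3 ..
    finally show ?thesis .
  qed
  have kc: "k (th m j) \<ge> 0 \<and> (k (th m j) = 0 \<longleftrightarrow> NN m dvd (j - j1) \<or> NN m dvd (j - (j1 + e)))"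
    if Mj: "M dvd (j - j1)" for j
  proof -
    obtain r where r: "j - j1 = M * r" using Mj by (rule dvdE)
    have ee: "th m j - (c1 + pi / 3) = 2 * pi * of_int r / 3 - pi / 3"
      unfolding c1_def by (rule th_coset[OF NM r])
    have kv: "k (th m j) = 1/2 - cos (2 * pi * of_int r / 3 - pi / 3)" unfolding k_def ee ..
    have d1: "NN m dvd (j - j1) \<longleftrightarrow> 3 dvd r" unfolding r NM using M0 by (intro dvd3M) simp
    have r2: "j - (j1 + e) = M * (r - 1)" using r eM by (simp add: algebra_simps)
    have d2: "NN m dvd (j - (j1 + e)) \<longleftrightarrow> 3 dvd (r - 1)" unfolding r2 NM using M0 by (intro dvd3M) simp
    show ?thesis unfolding kv d1 d2 by (rule Bval)
  qed
  have bk: "M dvd (j - j1)" if hj: "NN m dvd (j - j1) \<or> NN m dvd (j - (j1 + e))" for j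
  proof -
    have MN: "M dvd NN m" unfolding NM by simp
    show ?thesis
    proof (cases "NN m dvd (j - j1)")
      case True then show ?thesis by (rule dvd_trans[OF MN])
    next
      case False
      then have "NN m dvd (j - (j1 + e))" using hj by simp
      then have Md: "M dvd (j - (j1 + e))" by (rule dvd_trans[OF MN])
      have eq: "j - j1 = (j - (j1 + e)) + M" using eM by simp
      show ?thesis unfolding eq by (rule dvd_add[OF Md]) simp
    qed
  qed
  show ?thesis
  proof (rule combine[OF tG tk Gnn])
    show "\<forall>j. G (th m j) = 0 \<longrightarrow> 0 \<le> k (th m j)" using Gz kc by simp
    show "\<forall>j. (G (th m j) = 0 \<and> k (th m j) = 0) = (NN m dvd j - j1 \<or> NN m dvd j - (j1 + e))"
    proof
      fix j
      show "(G (th m j) = 0 \<and> k (th m j) = 0) = (NN m dvd j - j1 \<or> NN m dvd j - (j1 + e))"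
        using Gz[of j] kc[of j] bk[of j] by auto
    qed
  qed
qed

lemma caseC:
  assumes e1: "NN m < 3 * e" and e2: "2 * e < NN m" and Fp: "Fprop m j1 e"
  shows "\<exists>f. good m j1 (j1 + e) f"
proof -
  obtain F where F: "trigm m (\<lambda>t. F (3 * t)) \<and> (\<forall>j. F (3 * th m j) \<ge> 0) \<and>
     (\<forall>j. F (3 * th m j) = 0 \<longleftrightarrow> NN m dvd 3 * (j - j1) \<or> NN m dvd 3 * (j - j1 - e))"
    using Fp unfolding Fprop_def by (rule exE)
  define G where "G t = F (3 * t)" for t
  have tG: "trigm m G" using F unfolding G_def by simp
  have Gnn: "\<forall>j. G (th m j) \<ge> 0" using F unfolding G_def by simp
  define M :: int where "M = 4 * 3 ^ m"
  have NM: "NN m = 3 * M" unfolding M_def by (rule NN_eq)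
  have M0: "M > 0" unfolding M_def by simp
  have Me: "M < e" "2 * e < 3 * M" using e1 e2 NM by simp_all
  have nMe: "\<not> M dvd e" by (rule notdvd1[OF M0 Me])
  have Gz: "G (th m j) = 0 \<longleftrightarrow> M dvd (j - j1) \<or> M dvd (j - j1 - e)" for j
  proof -
    have "G (th m j) = 0 \<longleftrightarrow> NN m dvd 3 * (j - j1) \<or> NN m dvd 3 * (j - j1 - e)"
      unfolding G_def using F by blast
    also have "\<dots> \<longleftrightarrow> M dvd (j - j1) \<or> M dvd (j - j1 - e)" unfolding NM dvd3 ..
    finally show ?thesis .
  qed
  define \<delta> where "\<delta> = pi * of_int e / of_int (NN m)"
  define c where "c = th m j1 + \<delta>"
  define k where "k t = sin (6 * \<delta>) - sin (5 * \<delta>) * cos (t - c) - sin \<delta> * cos (5 * (t - c))" for t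
  have "trigm m (\<lambda>t. sin (6 * \<delta>) + (- sin (5 * \<delta>) * cos c) * cos t + (- sin (5 * \<delta>) * sin c) * sin t
      + 0 * cos (3 * t) + 0 * sin (3 * t) + (- sin \<delta> * cos (5 * c)) * cos (5 * t) + (- sin \<delta> * sin (5 * c)) * sin (5 * t))"
    by (rule trigm_lev0)
  moreover have "(\<lambda>t. sin (6 * \<delta>) + (- sin (5 * \<delta>) * cos c) * cos t + (- sin (5 * \<delta>) * sin c) * sin t
      + 0 * cos (3 * t) + 0 * sin (3 * t) + (- sin \<delta> * cos (5 * c)) * cos (5 * t) + (- sin \<delta> * sin (5 * c)) * sin (5 * t)) = k"
    unfolding k_def by (rule ext) (simp add: right_diff_distrib cos_diff algebra_simps)
  ultimately have tk: "trigm m k" by simp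
  have s6: "sin (6 * \<delta>) > 0"
  proof -
    define y where "y = 2 * pi * of_int (3 * e - NN m) / of_int (NN m)"
    have y6: "6 * \<delta> = y + 2 * pi * of_int (1::int)" unfolding y_def \<delta>_def using NN_pos[of m]
      by (simp add: field_simps)
    have "0 < y" unfolding y_def using e1 NN_pos[of m] by (simp add: divide_pos_pos)
    moreover have "y < pi"
    proof -
      have "of_int (2 * (3 * e - NN m)) < (of_int (NN m) :: real)" using e2 by simp
      then have "2 * of_int (3 * e - NN m) < (of_int (NN m) :: real)" by simp
      then show ?thesis unfolding y_def using NN_pos[of m] pi_gt_zero by (simp add: field_simps)
    qed
    ultimately have "sin y > 0" by (rule sin_gt_zero)
    then show ?thesis unfolding y6 sin_per .
  qed
  have kc1: "k (th m j) \<ge> 0 \<and> (k (th m j) = 0 \<longleftrightarrow> NN m dvd (j - j1)) \<and> \<not> NN m dvd (j - (j1 + e))"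
    if Mj: "M dvd (j - j1)" for j
  proof -
    obtain r where r: "j - j1 = M * r" using Mj by (rule dvdE)
    have "th m j - c = 2 * pi * of_int r / 3 - \<delta>"
      unfolding c_def by (rule th_coset[OF NM r])
    then have kv: "k (th m j) = sin (6 * \<delta>) * (1 - cos (2 * pi * of_int r / 3))"
      unfolding k_def using Kval(1)[of \<delta> r] by simp
    have d1: "NN m dvd (j - j1) \<longleftrightarrow> 3 dvd r" unfolding r NM using M0 by (intro dvd3M) simp
    have nd: "\<not> NN m dvd (j - (j1 + e))"
    proof
      assume "NN m dvd (j - (j1 + e))"
      then have "M dvd (j - (j1 + e))" unfolding NM by (rule dvd_mult_right)
      then have "M dvd (j - j1) - (j - (j1 + e))" by (rule dvd_diff[OF Mj])
      then have "M dvd e" by simp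
      then show False using nMe by simp
    qed
    have "k (th m j) \<ge> 0" unfolding kv using s6 by simp
    moreover have "k (th m j) = 0 \<longleftrightarrow> 3 dvd r" unfolding kv using s6 cos3[of r] by simp
    ultimately show ?thesis using d1 nd by simp
  qed
  have kc2: "k (th m j) \<ge> 0 \<and> (k (th m j) = 0 \<longleftrightarrow> NN m dvd (j - (j1 + e))) \<and> \<not> NN m dvd (j - j1)"
    if Mj: "M dvd (j - j1 - e)" for j
  proof -
    obtain r where r: "j - j1 - e = M * r" using Mj by (rule dvdE)
    have "th m j - c = \<delta> + 2 * pi * of_int r / 3"
      unfolding c_def by (rule th_coset2[OF NM r \<delta>_def])
    then have kv: "k (th m j) = sin (6 * \<delta>) * (1 - cos (2 * pi * of_int r / 3))"
      unfolding k_def using Kval(2)[of \<delta> r] by simp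
    have r': "j - (j1 + e) = M * r" using r by simp
    have d1: "NN m dvd (j - (j1 + e)) \<longleftrightarrow> 3 dvd r" unfolding r' NM using M0 by (intro dvd3M) simp
    have nd: "\<not> NN m dvd (j - j1)"
    proof
      assume "NN m dvd (j - j1)"
      then have "M dvd (j - j1)" unfolding NM by (rule dvd_mult_right)
      then have "M dvd (j - j1) - (j - j1 - e)" by (rule dvd_diff[OF _ Mj])
      then have "M dvd e" by simp
      then show False using nMe by simp
    qed
    have "k (th m j) \<ge> 0" unfolding kv using s6 by simp
    moreover have "k (th m j) = 0 \<longleftrightarrow> 3 dvd r" unfolding kv using s6 cos3[of r] by simp
    ultimately show ?thesis using d1 nd by simp
  qed
  have bk: "M dvd (j - j1) \<or> M dvd (j - j1 - e)" if hj: "NN m dvd (j - j1) \<or> NN m dvd (j - (j1 + e))" for j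
  proof -
    have MN: "M dvd NN m" unfolding NM by simp
    have e: "j - (j1 + e) = j - j1 - e" by simp
    show ?thesis using hj dvd_trans[OF MN, of "j - j1"] dvd_trans[OF MN, of "j - j1 - e"] unfolding e by blast
  qed
  show ?thesis
  proof (rule combine[OF tG tk Gnn])
    show "\<forall>j. G (th m j) = 0 \<longrightarrow> 0 \<le> k (th m j)"
    proof (intro allI impI)
      fix j assume "G (th m j) = 0"
      then have "M dvd (j - j1) \<or> M dvd (j - j1 - e)" using Gz by simp
      then show "0 \<le> k (th m j)" using kc1[of j] kc2[of j] by (elim disjE) simp_all
    qed
    show "\<forall>j. (G (th m j) = 0 \<and> k (th m j) = 0) = (NN m dvd j - j1 \<or> NN m dvd j - (j1 + e))"
    proof
      fix j
      show "(G (th m j) = 0 \<and> k (th m j) = 0) = (NN m dvd j - j1 \<or> NN m dvd j - (j1 + e))"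
      proof (cases "M dvd (j - j1)")
        case True
        then show ?thesis using Gz[of j] kc1[of j] by auto
      next
        case False
        show ?thesis
        proof (cases "M dvd (j - j1 - e)")
          case True
          then show ?thesis using Gz[of j] kc2[of j] by auto
        next
          case False
          then show ?thesis using \<open>\<not> M dvd (j - j1)\<close> Gz[of j] bk[of j] by auto
        qed
      qed
    qed
  qed
qed

lemma Fprov0:
  assumes "NN 0 < 3 * e" "2 * e < NN 0"
  shows "Fprop 0 j1 e"
proof -
  have e5: "e = 5" using assms by (simp add: NN_def)
  have N12: "NN 0 = 12" by (simp add: NN_def)
  define s1 where "s1 = 3 * th 0 j1"
  define F where "F s = 1 - cos (s - s1) - sin (s - s1)" for s
  have "trigm 0 (\<lambda>t. 1 + 0 * cos t + 0 * sin t + (sin s1 - cos s1) * cos (3 * t) + (- sin s1 - cos s1) * sin (3 * t)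
      + 0 * cos (5 * t) + 0 * sin (5 * t))" by (rule trigm_lev0)
  moreover have "(\<lambda>t. 1 + 0 * cos t + 0 * sin t + (sin s1 - cos s1) * cos (3 * t) + (- sin s1 - cos s1) * sin (3 * t)
      + 0 * cos (5 * t) + 0 * sin (5 * t)) = (\<lambda>t. F (3 * t))"
    unfolding F_def by (rule ext) (simp add: cos_diff sin_diff algebra_simps)
  ultimately have tF: "trigm 0 (\<lambda>t. F (3 * t))" by simp
  have Fj: "F (3 * th 0 j) = 1 - cos (pi * of_int (j - j1) / 2) - sin (pi * of_int (j - j1) / 2)" for j
  proof -
    have ee: "3 * th 0 j - s1 = pi * of_int (j - j1) / 2" unfolding s1_def th_def NN_def by (simp add: field_simps)
    show ?thesis unfolding F_def ee ..
  qed
  have nn: "\<forall>j. F (3 * th 0 j) \<ge> 0" unfolding Fj using Q4val by blast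
  have z: "\<forall>j. F (3 * th 0 j) = 0 \<longleftrightarrow> NN 0 dvd 3 * (j - j1) \<or> NN 0 dvd 3 * (j - j1 - e)"
  proof
    fix j
    have "F (3 * th 0 j) = 0 \<longleftrightarrow> 4 dvd (j - j1) \<or> 4 dvd (j - j1 - 1)" unfolding Fj using Q4val by blast
    also have "\<dots> \<longleftrightarrow> NN 0 dvd 3 * (j - j1) \<or> NN 0 dvd 3 * (j - j1 - e)" unfolding e5 N12 by presburger
    finally show "F (3 * th 0 j) = 0 \<longleftrightarrow> NN 0 dvd 3 * (j - j1) \<or> NN 0 dvd 3 * (j - j1 - e)" .
  qed
  show ?thesis unfolding Fprop_def using tF nn z by blast
qed

lemma notdvd2:
  fixes h e :: int
  assumes "0 < h" "2 * h < e" "e < 3 * h"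
  shows "\<not> (2 * h) dvd (- e - h)"
proof
  assume "(2 * h) dvd (- e - h)"
  then obtain k where k: "- e - h = 2 * h * k" by (rule dvdE)
  define s where "s = -1 - 2 * k"
  have es: "e = h * s" unfolding s_def using k by (simp add: algebra_simps)
  have "h * 2 < h * s" using assms(2) es by (simp add: algebra_simps)
  then have "2 < s" using assms(1) by (simp only: mult_less_cancel_left_pos)
  have "h * s < h * 3" using assms(3) es by (simp add: algebra_simps)
  then have "s < 3" using assms(1) by (simp only: mult_less_cancel_left_pos)
  with \<open>2 < s\<close> show False by simp
qed

lemma Fprov_step:
  assumes IH: "\<And>j1 j2. \<not> NN m dvd (j1 - j2) \<Longrightarrow> \<not> NN m dvd (j1 - j2 - NN m div 2) \<Longrightarrow> \<exists>f. good m j1 j2 f"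
    and e1: "NN (Suc m) < 3 * e" and e2: "2 * e < NN (Suc m)"
  shows "Fprop (Suc m) j1 e"
proof -
  define M where "M = NN m"
  have M0: "M > 0" unfolding M_def by (rule NN_pos)
  have NS: "NN (Suc m) = 3 * M" unfolding M_def by (rule NN_Suc)
  have Me: "M < e" "2 * e < 3 * M" using e1 e2 NS by simp_all
  define h :: int where "h = 2 * 3 ^ (m + 1)"
  have Mh: "M = 2 * h" unfolding M_def h_def NN_def by simp
  have Mh2: "M div 2 = h" unfolding Mh by simp
  have h0: "h > 0" unfolding h_def by simp
  have c1: "\<not> NN m dvd (j1 - (j1 + e))"
  proof
    assume "NN m dvd (j1 - (j1 + e))"
    then have "M dvd e" unfolding M_def by simp
    then show False using notdvd1[OF M0 Me] by simp
  qed
  have c2: "\<not> NN m dvd (j1 - (j1 + e) - NN m div 2)"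
  proof -
    have "j1 - (j1 + e) - NN m div 2 = - e - h" using Mh2 M_def by simp
    moreover have "\<not> (2 * h) dvd (- e - h)" using notdvd2[OF h0] Me Mh by simp
    ultimately show ?thesis using Mh M_def by simp
  qed
  obtain f where gf: "good m j1 (j1 + e) f" using IH[OF c1 c2] by (rule exE)
  have tf: "trigm (Suc m) (\<lambda>t. f (3 * t))" using gf unfolding good_def by (simp add: trigm_shift)
  have "\<forall>j. f (3 * th (Suc m) j) \<ge> 0" using gf unfolding good_def th_Suc by simp
  moreover have "\<forall>j. f (3 * th (Suc m) j) = 0 \<longleftrightarrow> NN (Suc m) dvd 3 * (j - j1) \<or> NN (Suc m) dvd 3 * (j - j1 - e)"
  proof
    fix j
    have "f (3 * th (Suc m) j) = 0 \<longleftrightarrow> NN m dvd (j - j1) \<or> NN m dvd (j - (j1 + e))"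
      using gf unfolding good_def th_Suc by blast
    also have "\<dots> \<longleftrightarrow> NN (Suc m) dvd 3 * (j - j1) \<or> NN (Suc m) dvd 3 * (j - j1 - e)"
      unfolding NS M_def dvd3 by (simp add: algebra_simps)
    finally show "f (3 * th (Suc m) j) = 0 \<longleftrightarrow> NN (Suc m) dvd 3 * (j - j1) \<or> NN (Suc m) dvd 3 * (j - j1 - e)" .
  qed
  ultimately show ?thesis unfolding Fprop_def using tf by blast
qed

lemma core0:
  assumes Fp: "\<And>j1 e. NN m < 3 * e \<Longrightarrow> 2 * e < NN m \<Longrightarrow> Fprop m j1 e"
    and e0: "0 < e" and e2: "2 * e < NN m"
  shows "\<exists>f. good m j1 (j1 + e) f"
proof -
  consider "3 * e < NN m" | "3 * e = NN m" | "NN m < 3 * e" by linarith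
  then show ?thesis
  proof cases
    case 1 then show ?thesis using caseA[OF e0] by blast
  next
    case 2 then show ?thesis using caseB by blast
  next
    case 3 then show ?thesis using caseC[OF 3 e2 Fp[OF 3 e2]] by blast
  qed
qed

lemma core:
  assumes Fp: "\<And>j1 e. NN m < 3 * e \<Longrightarrow> 2 * e < NN m \<Longrightarrow> Fprop m j1 e"
    and n1: "\<not> NN m dvd (j1 - j2)" and n2: "\<not> NN m dvd (j1 - j2 - NN m div 2)"
  shows "\<exists>f. good m j1 j2 f"
proof -
  define N where "N = NN m"
  have N0: "N > 0" unfolding N_def by (rule NN_pos)
  define h :: int where "h = 2 * 3 ^ (m + 1)"
  have Nh: "N = 2 * h" unfolding N_def h_def NN_def by simp
  have Nh2: "N div 2 = h" unfolding Nh by simp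
  define e where "e = (j2 - j1) mod N"
  have e_rng: "0 \<le> e" "e < N" unfolding e_def using N0 by simp_all
  have de: "N dvd (j2 - j1 - e)" unfolding e_def by (rule dvd_minus_mod)
  have e_ne0: "e \<noteq> 0"
  proof
    assume "e = 0"
    then have "N dvd (j2 - j1)" using de by simp
    then have "N dvd (j1 - j2)" by (metis dvd_minus_iff minus_diff_eq)
    then show False using n1 N_def by simp
  qed
  have e_neh: "e \<noteq> h"
  proof
    assume "e = h"
    then have "N dvd (j2 - j1 - h)" using de by simp
    then have a: "N dvd - (j2 - j1 - h)" by (simp only: dvd_minus_iff)
    have b: "N dvd - (j2 - j1 - h) - N" by (rule dvd_diff[OF a dvd_refl])
    have eq: "- (j2 - j1 - h) - N = j1 - j2 - NN m div 2" using Nh Nh2 N_def by simp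
    from b have "N dvd j1 - j2 - NN m div 2" by (simp only: eq)
    then show False using n2 N_def by simp
  qed
  show ?thesis
  proof (cases "e < h")
    case True
    then have "2 * e < NN m" using Nh N_def by simp
    then obtain f where "good m j1 (j1 + e) f" using core0[OF Fp] e_rng e_ne0 by fastforce
    moreover have "NN m dvd (j1 + e - j2)"
    proof -
      have "N dvd - (j2 - j1 - e)" using de by (simp only: dvd_minus_iff)
      then show ?thesis unfolding N_def by (simp add: algebra_simps)
    qed
    ultimately have "good m j1 j2 f" using good_cong[of m j1 "j1 + e" f j1 j2] by simp
    then show ?thesis by blast
  next
    case False
    define e' where "e' = N - e"
    have "0 < e'" "2 * e' < NN m" unfolding e'_def using False e_neh e_rng Nh N_def by simp_all
    then obtain f where "good m j2 (j2 + e') f" using core0[OF Fp] by blast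
    then have g: "good m (j2 + e') j2 f" by (rule good_swap)
    have "NN m dvd (j2 + e' - j1)"
    proof -
      have "N dvd (j2 - j1 - e) + N" using de by simp
      moreover have "(j2 - j1 - e) + N = j2 + e' - j1" unfolding e'_def by simp
      ultimately show ?thesis unfolding N_def by simp
    qed
    then have "good m j1 j2 f" using good_cong[OF g, of j1 j2] by simp
    then show ?thesis by blast
  qed
qed

lemma main_edge:
  "\<not> NN m dvd (j1 - j2) \<Longrightarrow> \<not> NN m dvd (j1 - j2 - NN m div 2) \<Longrightarrow> \<exists>f. good m j1 j2 f"
proof (induction m arbitrary: j1 j2)
  case 0
  show ?case by (rule core[OF Fprov0 0(1) 0(2)])
next
  case (Suc m)
  show ?case by (rule core[OF Fprov_step[OF Suc.IH] Suc.prems])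
qed

lemma NN_nat: "NN m = int (4 * 3 ^ (m + 1))" by (simp add: NN_def)

lemma A_eq: "A_set m = (\<lambda>j. th m (int j)) ` {..<4 * 3 ^ (m + 1)}"
proof -
  have "A_set m = (\<lambda>j. 2 * pi * real j / real (4 * 3 ^ (m + 1))) ` {..<4 * 3 ^ (m + 1)}"
    unfolding A_set_def by blast
  moreover have "(\<lambda>j. th m (int j)) = (\<lambda>j. 2 * pi * real j / real (4 * 3 ^ (m + 1)))"
    unfolding th_def NN_nat by (rule ext) simp
  ultimately show ?thesis by (simp only:)
qed

lemma finite_A: "finite (A_set m)" unfolding A_eq by simp

lemma th_add: "th m (a + b) = th m a + th m b" unfolding th_def of_int_add by (simp add: add_divide_distrib distrib_left)
lemma th_NN: "th m (NN m * k) = 2 * pi * of_int k"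
  unfolding th_def using NN_pos[of m] by (simp add: field_simps)
lemma th_half: "th m (NN m div 2) = pi"
proof -
  have "NN m div 2 = 2 * 3 ^ (m + 1)" "NN m = 2 * (2 * 3 ^ (m + 1))" by (simp_all add: NN_def)
  then show ?thesis unfolding th_def by simp
qed
lemma th_inj: "th m a = th m b \<Longrightarrow> a = b"
  unfolding th_def using NN_pos[of m] by (simp add: field_simps)
lemma th_range: assumes "j < 4 * 3 ^ (m + 1)" shows "0 \<le> th m (int j) \<and> th m (int j) < 2 * pi"
proof -
  define n :: nat where "n = 4 * 3 ^ (m + 1)"
  have th: "th m (int j) = 2 * pi * (real j / real n)" unfolding th_def NN_nat n_def by simp
  have n0: "real n > 0" unfolding n_def by simp
  have "real j < real n" using assms unfolding n_def by (simp only: of_nat_less_iff)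
  then have "real j / real n < 1" using n0 by simp
  then have "2 * pi * (real j / real n) < 2 * pi * 1" using pi_gt_zero by (intro mult_strict_left_mono) simp_all
  moreover have "0 \<le> 2 * pi * (real j / real n)" using n0 by simp
  ultimately show ?thesis unfolding th by simp
qed

lemma Psi_per: "Psi idx (t + 2 * pi * of_int n) = Psi idx t"
  by (simp add: Psi_def vec_eq_iff Psi_coord_per)

lemma cos_oddpi: "odd K \<Longrightarrow> cos (x + real K * pi) = - cos x"
  by (simp add: cos_add)
lemma sin_oddpi: "odd K \<Longrightarrow> sin (x + real K * pi) = - sin x"
  by (simp add: sin_add)

lemma U3_anti:
  assumes "odd K" shows "U3_coord r (s + real K * pi) = - U3_coord r s"
proof -
  have a: "3 * (s + real K * pi) = 3 * s + real (3 * K) * pi" by (simp add: algebra_simps)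
  have b: "5 * (s + real K * pi) = 5 * s + real (5 * K) * pi" by (simp add: algebra_simps)
  have o: "odd (3 * K)" "odd (5 * K)" using assms by simp_all
  note c1 = cos_oddpi[OF assms, of s] and s1 = sin_oddpi[OF assms, of s]
  note c3 = cos_oddpi[OF o(1), of "3 * s"] and s3 = sin_oddpi[OF o(1), of "3 * s"]
  note c5 = cos_oddpi[OF o(2), of "5 * s"] and s5 = sin_oddpi[OF o(2), of "5 * s"]
  show ?thesis unfolding U3_coord_def a b c1 s1 c3 s3 c5 s5 by simp
qed

lemma Psi_coord_anti: "Psi_coord k (t + pi) = - Psi_coord k t"
proof -
  have e: "(3::real) ^ (k div 6) * (t + pi) = 3 ^ (k div 6) * t + real (3 ^ (k div 6)) * pi"
    by (simp add: algebra_simps)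
  have "odd ((3::nat) ^ (k div 6))" by simp
  then show ?thesis unfolding Psi_coord_def e by (rule U3_anti)
qed

lemma Psi_anti: "Psi idx (t + pi) = - Psi idx t"
  by (simp add: Psi_def vec_eq_iff Psi_coord_anti)

lemma grid_in_S: "Psi idx (th m j) \<in> Psi idx ` A_set m"
proof -
  have N0: "NN m > 0" by (rule NN_pos)
  obtain r q where jeq: "j = r + NN m * q" and r0: "0 \<le> r" "r < NN m"
  proof
    show "j = j mod NN m + NN m * (j div NN m)" by simp
    show "0 \<le> j mod NN m" "j mod NN m < NN m" using N0 by simp_all
  qed
  have thj: "th m j = th m r + 2 * pi * of_int q" unfolding jeq th_add th_NN by (rule refl)
  have Pe: "Psi idx (th m j) = Psi idx (th m r)" unfolding thj by (rule Psi_per)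
  have rr: "int (nat r) = r" using r0 by simp
  have "nat r \<in> {..<4 * 3 ^ (m + 1)}" using r0 unfolding NN_nat by (simp add: nat_less_iff)
  then have "th m (int (nat r)) \<in> A_set m" unfolding A_eq by (rule imageI)
  then have "th m r \<in> A_set m" unfolding rr .
  then show ?thesis unfolding Pe by (rule imageI)
qed

lemma S_sym: "uminus ` (Psi idx ` A_set m) = Psi idx ` A_set m"
proof -
  have *: "- x \<in> Psi idx ` A_set m" if xS: "x \<in> Psi idx ` A_set m" for x
  proof -
    obtain j where j: "x = Psi idx (th m (int j))" using xS unfolding A_eq by blast
    have "- x = Psi idx (th m (int j) + pi)" unfolding j Psi_anti by simp
    also have "\<dots> = Psi idx (th m (int j + NN m div 2))" by (simp add: th_add th_half)
    finally show ?thesis using grid_in_S by simp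
  qed
  show ?thesis
  proof
    show "uminus ` Psi idx ` A_set m \<subseteq> Psi idx ` A_set m" using * by blast
    show "Psi idx ` A_set m \<subseteq> uminus ` Psi idx ` A_set m"
    proof
      fix x assume "x \<in> Psi idx ` A_set m"
      then have "- x \<in> Psi idx ` A_set m" by (rule *)
      then show "x \<in> uminus ` Psi idx ` A_set m" by (rule rev_image_eqI) simp
    qed
  qed
qed

lemma P_sym: "uminus ` (convex hull (Psi idx ` A_set m)) = convex hull (Psi idx ` A_set m)"
proof -
  have "uminus ` (convex hull (Psi idx ` A_set m)) = (\<lambda>x. (-1) *\<^sub>R x) ` (convex hull (Psi idx ` A_set m))"
    by simp
  also have "\<dots> = convex hull ((\<lambda>x. (-1) *\<^sub>R x) ` (Psi idx ` A_set m))"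
    by (rule convex_hull_scaling[symmetric])
  also have "(\<lambda>x. (-1) *\<^sub>R x) ` (Psi idx ` A_set m) = Psi idx ` A_set m"
    using S_sym by simp
  finally show ?thesis .
qed

lemma face_from_trig:
  fixes idx :: "'n::finite \<Rightarrow> nat"
  assumes bij: "bij_betw idx UNIV {..<6 * (m + 1)}" and tf: "trigm m f"
    and nn: "\<forall>t\<in>A_set m. f t \<ge> 0"
  shows "convex hull (Psi idx ` {t \<in> A_set m. f t = 0}) exposed_face_of convex hull (Psi idx ` A_set m)"
proof -
  obtain a \<beta> where fa: "\<forall>t. f t = \<beta> + a \<bullet> Psi idx t" using trigm_vec[OF bij tf] by blast
  define S where "S = Psi idx ` A_set m"
  define H where "H = {x. (- a) \<bullet> x = \<beta>}"
  have le: "S \<subseteq> {x. (- a) \<bullet> x \<le> \<beta>}"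
  proof
    fix x assume "x \<in> S"
    then obtain t where t: "t \<in> A_set m" "x = Psi idx t" unfolding S_def by blast
    have "(- a) \<bullet> x = \<beta> - f t" using fa t(2) by simp
    then show "x \<in> {x. (- a) \<bullet> x \<le> \<beta>}" using nn t(1) by simp
  qed
  have leP: "convex hull S \<subseteq> {x. (- a) \<bullet> x \<le> \<beta>}"
    by (rule hull_minimal[OF le]) (rule convex_halfspace_le)
  have ex: "(convex hull S \<inter> H) exposed_face_of convex hull S"
    unfolding H_def by (rule exposed_face_of_Int_supporting_hyperplane_le) (use leP in auto)
  have SH: "S \<inter> H = Psi idx ` {t \<in> A_set m. f t = 0}"
  proof
    show "S \<inter> H \<subseteq> Psi idx ` {t \<in> A_set m. f t = 0}"
    proof
      fix x assume "x \<in> S \<inter> H"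
      then obtain t where t: "t \<in> A_set m" "x = Psi idx t" "(- a) \<bullet> x = \<beta>" unfolding S_def H_def by blast
      then have "f t = 0" using fa by simp
      then show "x \<in> Psi idx ` {t \<in> A_set m. f t = 0}" using t by blast
    qed
    show "Psi idx ` {t \<in> A_set m. f t = 0} \<subseteq> S \<inter> H"
    proof
      fix x assume "x \<in> Psi idx ` {t \<in> A_set m. f t = 0}"
      then obtain t where t: "t \<in> A_set m" "x = Psi idx t" "f t = 0" by blast
      then have "(- a) \<bullet> x = \<beta>" using fa by simp
      then show "x \<in> S \<inter> H" using t unfolding S_def H_def by blast
    qed
  qed
  have cS: "compact S" unfolding S_def using finite_A by (simp add: finite_imp_compact)
  have fc: "(convex hull S \<inter> H) face_of convex hull S" using ex unfolding exposed_face_of_def by simp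
  obtain S' where S': "S' \<subseteq> S" "convex hull S \<inter> H = convex hull S'"
    using face_of_convex_hull_subset[OF cS fc] by blast
  have "S' \<subseteq> H" using S'(2) hull_subset[of S' convex] by blast
  then have "convex hull S \<inter> H \<subseteq> convex hull (S \<inter> H)" unfolding S'(2) using S'(1) by (intro hull_mono) blast
  moreover have "convex hull (S \<inter> H) \<subseteq> convex hull S \<inter> H"
  proof -
    have "convex hull (S \<inter> H) \<subseteq> convex hull S" by (rule hull_mono) blast
    moreover have "convex H" unfolding H_def by (rule convex_hyperplane)
    then have "convex hull (S \<inter> H) \<subseteq> H" by (rule_tac hull_minimal) auto
    ultimately show ?thesis by blast
  qed
  ultimately have "convex hull S \<inter> H = convex hull (S \<inter> H)" by blast
  then show ?thesis using ex SH unfolding S_def by simp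
qed

lemma A_range: "t \<in> A_set m \<Longrightarrow> 0 \<le> t \<and> t < 2 * pi"
  unfolding A_eq using th_range by auto

lemma A_unique:
  assumes "t \<in> A_set m" "t' \<in> A_set m" "t = t' + 2 * pi * of_int n"
  shows "t = t'"
proof -
  have r: "0 \<le> t" "t < 2 * pi" "0 \<le> t'" "t' < 2 * pi" using A_range assms(1,2) by auto
  have h1: "2 * pi * of_int n < 2 * pi * 1" using r assms(3) by linarith
  have "of_int n < (1::real)" by (rule mult_left_less_imp_less[OF h1]) (use pi_gt_zero in simp)
  then have n1: "n < 1" by simp
  have h2: "2 * pi * (-1) < 2 * pi * of_int n" using r assms(3) by linarith
  have "-1 < (of_int n :: real)" by (rule mult_left_less_imp_less[OF h2]) (use pi_gt_zero in simp)
  then have n2: "-1 < n" by simp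
  have "n = 0" using n1 n2 by simp
  then show ?thesis using assms(3) by simp
qed

lemma th_dvd:
  assumes "NN m dvd (a - b)" shows "\<exists>k. th m a = th m b + 2 * pi * of_int k"
proof -
  obtain k where "a - b = NN m * k" using assms by (rule dvdE)
  then have "a = b + NN m * k" by simp
  then have "th m a = th m b + 2 * pi * of_int k" by (simp only: th_add th_NN)
  then show ?thesis by blast
qed

lemma Psi_coord01: "Psi_coord 0 t = cos t" "Psi_coord 1 t = sin t" "Psi_coord (Suc 0) t = sin t"
  by (simp_all add: Psi_coord_def U3_coord_def)

lemma Psi_inj:
  fixes idx :: "'n::finite \<Rightarrow> nat"
  assumes bij: "bij_betw idx UNIV {..<6 * (m + 1)}"
  shows "inj_on (Psi idx) (A_set m)"
proof
  fix t t' assume tA: "t \<in> A_set m" and t'A: "t' \<in> A_set m" and eq: "Psi idx t = Psi idx t'"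
  have "0 \<in> idx ` UNIV" "1 \<in> idx ` UNIV" using bij unfolding bij_betw_def by auto
  then obtain i0 i1 where i: "idx i0 = 0" "idx i1 = 1" by (metis imageE)
  have "Psi idx t $ i0 = Psi idx t' $ i0" "Psi idx t $ i1 = Psi idx t' $ i1" using eq by simp_all
  then have "cos t = cos t'" "sin t = sin t'" unfolding Psi_def using i by (simp_all add: Psi_coord01)
  then obtain n :: int where "t = t' + 2 * pi * n" using sin_cos_eq_iff by metis
  then show "t = t'" using A_unique[OF tA t'A] by blast
qed

lemma card_S:
  fixes idx :: "'n::finite \<Rightarrow> nat"
  assumes bij: "bij_betw idx UNIV {..<6 * (m + 1)}"
  shows "card (Psi idx ` A_set m) = 4 * 3 ^ (m + 1)"
proof -
  have "inj_on (\<lambda>j. th m (int j)) {..<4 * 3 ^ (m + 1)}"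
    by (rule inj_onI) (drule th_inj, simp)
  then have "card (A_set m) = 4 * 3 ^ (m + 1)" unfolding A_eq by (simp add: card_image)
  then show ?thesis using card_image[OF Psi_inj[OF bij]] by simp
qed

lemma vertices:
  fixes idx :: "'n::finite \<Rightarrow> nat"
  assumes bij: "bij_betw idx UNIV {..<6 * (m + 1)}"
  shows "{v. {v} exposed_face_of convex hull (Psi idx ` A_set m)} = Psi idx ` A_set m"
proof
  show "{v. {v} exposed_face_of convex hull (Psi idx ` A_set m)} \<subseteq> Psi idx ` A_set m"
  proof
    fix v assume "v \<in> {v. {v} exposed_face_of convex hull (Psi idx ` A_set m)}"
    then have "{v} face_of convex hull (Psi idx ` A_set m)" unfolding exposed_face_of_def by simp
    then have "v extreme_point_of convex hull (Psi idx ` A_set m)" by (simp add: face_of_singleton)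
    then show "v \<in> Psi idx ` A_set m" by (rule extreme_point_of_convex_hull)
  qed
  show "Psi idx ` A_set m \<subseteq> {v. {v} exposed_face_of convex hull (Psi idx ` A_set m)}"
  proof
    fix v assume "v \<in> Psi idx ` A_set m"
    then obtain t0 where t0: "t0 \<in> A_set m" "v = Psi idx t0" by blast
    define f where "f t = 1 - cos (t - t0)" for t
    have "trigm m (\<lambda>t. 1 + (- cos t0) * cos t + (- sin t0) * sin t + 0 * cos (3 * t) + 0 * sin (3 * t)
      + 0 * cos (5 * t) + 0 * sin (5 * t))" by (rule trigm_lev0)
    moreover have "(\<lambda>t. 1 + (- cos t0) * cos t + (- sin t0) * sin t + 0 * cos (3 * t) + 0 * sin (3 * t)
      + 0 * cos (5 * t) + 0 * sin (5 * t)) = f"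
      unfolding f_def by (rule ext) (simp add: cos_diff algebra_simps)
    ultimately have tf: "trigm m f" by simp
    have nn: "\<forall>t\<in>A_set m. f t \<ge> 0" unfolding f_def by simp
    have Z: "{t \<in> A_set m. f t = 0} = {t0}"
    proof
      show "{t \<in> A_set m. f t = 0} \<subseteq> {t0}"
      proof
        fix t assume "t \<in> {t \<in> A_set m. f t = 0}"
        then have tA: "t \<in> A_set m" and "cos (t - t0) = 1" unfolding f_def by simp_all
        then obtain n :: int where "t - t0 = of_int n * 2 * pi" using cos_one_2pi_int by blast
        then have "t = t0 + 2 * pi * of_int n" by (simp add: algebra_simps)
        then show "t \<in> {t0}" using A_unique[OF tA t0(1)] by simp
      qed
      show "{t0} \<subseteq> {t \<in> A_set m. f t = 0}" using t0 unfolding f_def by simp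
    qed
    have "convex hull (Psi idx ` {t \<in> A_set m. f t = 0}) exposed_face_of convex hull (Psi idx ` A_set m)"
      by (rule face_from_trig[OF bij tf nn])
    then show "v \<in> {v. {v} exposed_face_of convex hull (Psi idx ` A_set m)}" unfolding Z t0(2) by simp
  qed
qed

lemma edges:
  fixes idx :: "'n::finite \<Rightarrow> nat"
  assumes bij: "bij_betw idx UNIV {..<6 * (m + 1)}"
    and t1: "t1 \<in> A_set m" and t2: "t2 \<in> A_set m" and ne: "t1 \<noteq> t2"
    and na: "\<not> (\<exists>k::int. t1 = t2 + pi + 2 * pi * of_int k)"
  shows "closed_segment (Psi idx t1) (Psi idx t2) exposed_face_of convex hull (Psi idx ` A_set m) \<and>
         aff_dim (closed_segment (Psi idx t1) (Psi idx t2)) = 1"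
proof -
  obtain j1 where j1: "t1 = th m (int j1)" using t1 unfolding A_eq by blast
  obtain j2 where j2: "t2 = th m (int j2)" using t2 unfolding A_eq by blast
  have c1: "\<not> NN m dvd (int j1 - int j2)"
  proof
    assume "NN m dvd (int j1 - int j2)"
    then obtain k where "th m (int j1) = th m (int j2) + 2 * pi * of_int k" using th_dvd by blast
    then have "t1 = t2" using A_unique[OF t1 t2] j1 j2 by simp
    then show False using ne by simp
  qed
  have c2: "\<not> NN m dvd (int j1 - int j2 - NN m div 2)"
  proof
    assume h: "NN m dvd (int j1 - int j2 - NN m div 2)"
    have h': "NN m dvd (int j1 - (int j2 + NN m div 2))" using h by (simp add: algebra_simps)
    obtain k where "th m (int j1) = th m (int j2 + NN m div 2) + 2 * pi * of_int k"
      using th_dvd[OF h'] by (rule exE)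
    then have "t1 = t2 + pi + 2 * pi * of_int k" using j1 j2 by (simp add: th_add th_half)
    then show False using na by blast
  qed
  obtain f where g: "good m (int j1) (int j2) f" using main_edge[OF c1 c2] by blast
  have tf: "trigm m f" using g unfolding good_def by simp
  have nn: "\<forall>t\<in>A_set m. f t \<ge> 0" using g unfolding good_def A_eq by auto
  have Z: "{t \<in> A_set m. f t = 0} = {t1, t2}"
  proof
    show "{t \<in> A_set m. f t = 0} \<subseteq> {t1, t2}"
    proof
      fix t assume "t \<in> {t \<in> A_set m. f t = 0}"
      then have tA: "t \<in> A_set m" and z: "f t = 0" by simp_all
      obtain j where j: "t = th m (int j)" using tA unfolding A_eq by blast
      have "NN m dvd (int j - int j1) \<or> NN m dvd (int j - int j2)" using g z j unfolding good_def by simp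
      then show "t \<in> {t1, t2}"
      proof
        assume "NN m dvd (int j - int j1)"
        then obtain k where "th m (int j) = th m (int j1) + 2 * pi * of_int k" using th_dvd by blast
        then have "t = t1" using A_unique[OF tA t1] j j1 by simp
        then show ?thesis by simp
      next
        assume "NN m dvd (int j - int j2)"
        then obtain k where "th m (int j) = th m (int j2) + 2 * pi * of_int k" using th_dvd by blast
        then have "t = t2" using A_unique[OF tA t2] j j2 by simp
        then show ?thesis by simp
      qed
    qed
    show "{t1, t2} \<subseteq> {t \<in> A_set m. f t = 0}"
      using g t1 t2 j1 j2 unfolding good_def by simp
  qed
  have ex: "convex hull (Psi idx ` {t \<in> A_set m. f t = 0}) exposed_face_of convex hull (Psi idx ` A_set m)"
    by (rule face_from_trig[OF bij tf nn])
  have seg: "convex hull (Psi idx ` {t \<in> A_set m. f t = 0}) = closed_segment (Psi idx t1) (Psi idx t2)"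
    unfolding Z by (simp add: segment_convex_hull)
  have dne: "Psi idx t1 \<noteq> Psi idx t2" using Psi_inj[OF bij] t1 t2 ne unfolding inj_on_def by blast
  have "aff_dim (closed_segment (Psi idx t1) (Psi idx t2)) = 1"
    unfolding segment_convex_hull aff_dim_convex_hull using dne by simp
  then show ?thesis using ex seg by simp
qed

lemma tel_cos: "2 * sin (x/2) * (\<Sum>j<n. cos (real j * x)) = sin ((real n - 1/2) * x) + sin (x/2)"
proof (induction n)
  case 0
  have "(real 0 - 1/2) * x = - (x/2)" by simp
  then show ?case by simp
next
  case (Suc n)
  have "2 * sin (x/2) * (\<Sum>j<Suc n. cos (real j * x)) =
        2 * sin (x/2) * (\<Sum>j<n. cos (real j * x)) + 2 * (sin (x/2) * cos (real n * x))"
    by (simp add: algebra_simps)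
  also have "\<dots> = sin ((real n - 1/2) * x) + sin (x/2) + (sin (x/2 + real n * x) + sin (x/2 - real n * x))"
    unfolding Suc sin_times_cos by simp
  also have "sin (x/2 - real n * x) = - sin ((real n - 1/2) * x)"
  proof -
    have "x/2 - real n * x = - ((real n - 1/2) * x)" by (simp add: algebra_simps)
    then show ?thesis by simp
  qed
  also have "x/2 + real n * x = (real (Suc n) - 1/2) * x" by (simp add: algebra_simps)
  finally show ?case by simp
qed

lemma tel_sin: "2 * sin (x/2) * (\<Sum>j<n. sin (real j * x)) = cos (x/2) - cos ((real n - 1/2) * x)"
proof (induction n)
  case 0
  have "(real 0 - 1/2) * x = - (x/2)" by simp
  then show ?case by simp
next
  case (Suc n)
  have "2 * sin (x/2) * (\<Sum>j<Suc n. sin (real j * x)) =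
        2 * sin (x/2) * (\<Sum>j<n. sin (real j * x)) + 2 * (sin (x/2) * sin (real n * x))"
    by (simp add: algebra_simps)
  also have "\<dots> = cos (x/2) - cos ((real n - 1/2) * x) + (cos (x/2 - real n * x) - cos (x/2 + real n * x))"
    unfolding Suc sin_times_sin by simp
  also have "cos (x/2 - real n * x) = cos ((real n - 1/2) * x)"
  proof -
    have "x/2 - real n * x = - ((real n - 1/2) * x)" by (simp add: algebra_simps)
    then show ?thesis by simp
  qed
  also have "x/2 + real n * x = (real (Suc n) - 1/2) * x" by (simp add: algebra_simps)
  finally show ?case by simp
qed

lemma CS_sum:
  fixes N :: nat and k :: int
  assumes N: "N > 0"
  shows "(\<Sum>j<N. cos (real j * (2 * pi * of_int k / real N))) = (if int N dvd k then real N else 0)"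
    and "(\<Sum>j<N. sin (real j * (2 * pi * of_int k / real N))) = 0"
proof -
  define x where "x = 2 * pi * of_int k / real N"
  have Nx: "(real N - 1/2) * x = 2 * pi * of_int k - x / 2" unfolding x_def using N by (simp add: field_simps)
  have s1: "sin ((real N - 1/2) * x) = - sin (x / 2)" unfolding Nx by (simp add: sin_diff)
  have c1: "cos ((real N - 1/2) * x) = cos (x / 2)" unfolding Nx by (simp add: cos_diff)
  have "(\<Sum>j<N. cos (real j * x)) = (if int N dvd k then real N else 0) \<and> (\<Sum>j<N. sin (real j * x)) = 0"
  proof (cases "int N dvd k")
    case True
    then obtain l where l: "k = int N * l" by (rule dvdE)
    have jx: "real j * x = 2 * pi * of_int (int j * l)" for j unfolding x_def l using N by (simp add: field_simps)
    have "(\<Sum>j<N. cos (real j * x)) = (\<Sum>j<N. 1)" unfolding jx cos_int_2pin by simp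
    moreover have "(\<Sum>j<N. sin (real j * x)) = (\<Sum>j<N. 0)" unfolding jx sin_int_2pin by simp
    ultimately show ?thesis using True by simp
  next
    case False
    have sx: "sin (x / 2) \<noteq> 0"
    proof
      assume "sin (x / 2) = 0"
      then obtain i :: int where "x / 2 = of_int i * pi" using sin_zero_iff_int2 by blast
      then have "of_int k = (of_int (i * int N) :: real)" unfolding x_def using N by (simp add: field_simps)
      then have "k = i * int N" by (simp only: of_int_eq_iff)
      then show False using False by simp
    qed
    have "2 * sin (x/2) * (\<Sum>j<N. cos (real j * x)) = 0" unfolding tel_cos s1 by simp
    moreover have "2 * sin (x/2) * (\<Sum>j<N. sin (real j * x)) = 0" unfolding tel_sin c1 by simp
    ultimately show ?thesis using sx False by simp
  qed
  then show "(\<Sum>j<N. cos (real j * (2 * pi * of_int k / real N))) = (if int N dvd k then real N else 0)"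
    and "(\<Sum>j<N. sin (real j * (2 * pi * of_int k / real N))) = 0" unfolding x_def by simp_all
qed

definition mu :: "nat \<Rightarrow> nat" where "mu r = (if r < 2 then 1 else if r < 4 then 3 else 5)"
definition fr :: "nat \<Rightarrow> nat" where "fr k = 3 ^ (k div 6) * mu (k mod 6)"
definition F0 :: "nat \<Rightarrow> nat set" where
  "F0 m = (\<lambda>q. 3 ^ q) ` {..m+1} \<union> (\<lambda>q. 5 * 3 ^ q) ` {..m}"

lemma Psi_coord_fr:
  "Psi_coord k t = (if even (k mod 6) then cos (real (fr k) * t) else sin (real (fr k) * t))"
proof -
  have "k mod 6 \<in> {0,1,2,3,4,5}" by auto
  then show ?thesis unfolding Psi_coord_def U3_coord_def fr_def mu_def
    by (auto simp: algebra_simps)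
qed

lemma fr_in: assumes "k < 6 * (m + 1)" shows "fr k \<in> F0 m"
proof -
  define q where "q = k div 6"
  have q: "q \<le> m" using assms unfolding q_def by simp
  have "k mod 6 \<in> {0,1,2,3,4,5}" by auto
  moreover have "3 ^ q \<in> F0 m" using q unfolding F0_def by auto
  moreover have "3 ^ q * 3 \<in> F0 m"
  proof -
    have "3 ^ q * 3 = (3::nat) ^ Suc q" unfolding power_Suc by (rule mult.commute)
    moreover have "Suc q \<le> m + 1" using q by simp
    ultimately show ?thesis unfolding F0_def by (metis UnI1 atMost_iff image_eqI)
  qed
  moreover have "3 ^ q * 5 \<in> F0 m" using q unfolding F0_def by (auto simp: mult.commute)
  ultimately show ?thesis unfolding fr_def mu_def q_def[symmetric] by auto
qed

lemma F0_bound: "f \<in> F0 m \<Longrightarrow> 0 < f \<and> f \<le> 5 * 3 ^ m"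
proof -
  assume "f \<in> F0 m"
  then consider q where "q \<le> m + 1" "f = 3 ^ q" | q where "q \<le> m" "f = 5 * 3 ^ q" unfolding F0_def by blast
  then show ?thesis
  proof cases
    case 1
    have "(3::nat) ^ q \<le> 3 ^ (m + 1)" using 1(1) by (rule power_increasing) simp
    then show ?thesis using 1 by simp
  next
    case 2
    have "(3::nat) ^ q \<le> 3 ^ m" using 2(1) by (rule power_increasing) simp
    then show ?thesis using 2 by simp
  qed
qed

lemma coord_ex:
  assumes "f \<in> F0 m"
  shows "\<exists>k<6 * (m + 1). even (k mod 6) \<and> fr k = f" and "\<exists>k<6 * (m + 1). odd (k mod 6) \<and> fr k = f"
proof -
  have "(\<exists>k<6 * (m + 1). even (k mod 6) \<and> fr k = f) \<and> (\<exists>k<6 * (m + 1). odd (k mod 6) \<and> fr k = f)"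
  proof -
    consider q where "q \<le> m + 1" "f = 3 ^ q" | q where "q \<le> m" "f = 5 * 3 ^ q"
      using assms unfolding F0_def by blast
    then show ?thesis
    proof cases
      case 1
      show ?thesis
      proof (cases q)
        case 0
        have "fr 0 = f" "fr 1 = f" using 1 0 by (simp_all add: fr_def mu_def)
        moreover have "(0::nat) < 6 * (m + 1)" "(1::nat) < 6 * (m + 1)" "even ((0::nat) mod 6)" "odd ((1::nat) mod 6)"
          by simp_all
        ultimately show ?thesis by blast
      next
        case (Suc p)
        have p: "p \<le> m" using 1 Suc by simp
        have k1: "(6 * p + 2) div 6 = p" "(6 * p + 2) mod 6 = 2" "(6 * p + 3) div 6 = p" "(6 * p + 3) mod 6 = 3"
          by presburger+
        have "fr (6 * p + 2) = f" "fr (6 * p + 3) = f" using 1 Suc unfolding fr_def mu_def k1 by simp_all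
        moreover have "6 * p + 2 < 6 * (m + 1)" "6 * p + 3 < 6 * (m + 1)" using p by simp_all
        moreover have "even ((6 * p + 2) mod 6)" "odd ((6 * p + 3) mod 6)" unfolding k1 by simp_all
        ultimately show ?thesis by blast
      qed
    next
      case 2
      have k1: "(6 * q + 4) div 6 = q" "(6 * q + 4) mod 6 = 4" "(6 * q + 5) div 6 = q" "(6 * q + 5) mod 6 = 5"
        by presburger+
      have "fr (6 * q + 4) = f" "fr (6 * q + 5) = f" using 2 unfolding fr_def mu_def k1 by simp_all
      moreover have "6 * q + 4 < 6 * (m + 1)" "6 * q + 5 < 6 * (m + 1)" using 2 by simp_all
      moreover have "even ((6 * q + 4) mod 6)" "odd ((6 * q + 5) mod 6)" unfolding k1 by simp_all
      ultimately show ?thesis by blast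
    qed
  qed
  then show "\<exists>k<6 * (m + 1). even (k mod 6) \<and> fr k = f" and "\<exists>k<6 * (m + 1). odd (k mod 6) \<and> fr k = f"
    by simp_all
qed

lemma pow3_ne5: "(3::nat) ^ a \<noteq> 5 * 3 ^ b"
proof
  assume h: "(3::nat) ^ a = 5 * 3 ^ b"
  show False
  proof (cases "a \<le> b")
    case True
    then have "(3::nat) ^ a \<le> 3 ^ b" by (rule power_increasing) simp
    then show False using h by simp
  next
    case False
    then have "(3::nat) ^ a = 3 ^ b * 3 ^ (a - b)" by (simp add: power_add[symmetric])
    then have c: "(3::nat) ^ (a - b) = 5" using h by simp
    show False
    proof (cases "a - b")
      case 0 then show False using c by simp
    next
      case (Suc c')
      show False
      proof (cases c')
        case 0 then show False using c Suc by simp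
      next
        case (Suc c'')
        have "(3::nat) ^ (a - b) = 9 * 3 ^ c''" using \<open>a - b = Suc c'\<close> Suc by simp
        moreover have "9 * 3 ^ c'' \<ge> (9::nat)" by simp
        ultimately show False using c by linarith
      qed
    qed
  qed
qed

lemma card_F0: "card (F0 m) = 2 * m + 3"
proof -
  have i1: "inj_on (\<lambda>q. (3::nat) ^ q) {..m+1}" by (rule inj_onI) simp
  have i2: "inj_on (\<lambda>q. (5::nat) * 3 ^ q) {..m}" by (rule inj_onI) simp
  have d: "(\<lambda>q. (3::nat) ^ q) ` {..m+1} \<inter> (\<lambda>q. 5 * 3 ^ q) ` {..m} = {}"
  proof (rule equals0I)
    fix x assume "x \<in> (\<lambda>q. (3::nat) ^ q) ` {..m+1} \<inter> (\<lambda>q. 5 * 3 ^ q) ` {..m}"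
    then obtain a b where "x = 3 ^ a" "x = 5 * 3 ^ b" by blast
    then show False using pow3_ne5[of a b] by simp
  qed
  have "card (F0 m) = card ((\<lambda>q. (3::nat) ^ q) ` {..m+1}) + card ((\<lambda>q. (5::nat) * 3 ^ q) ` {..m})"
    unfolding F0_def by (rule card_Un_disjoint[OF _ _ d]) simp_all
  also have "\<dots> = (m + 2) + (m + 1)" using card_image[OF i1] card_image[OF i2] by simp
  finally show ?thesis by simp
qed

lemma finite_F0: "finite (F0 m)" unfolding F0_def by simp

lemma argT: "of_int k * th m (int j) = real j * (2 * pi * of_int k / real (4 * 3 ^ (m + 1)))"
  unfolding th_def NN_nat by simp

lemma CSg:
  "(\<Sum>j<4 * 3 ^ (m + 1). cos (of_int k * th m (int j))) = (if int (4 * 3 ^ (m + 1)) dvd k then real (4 * 3 ^ (m + 1)) else 0)"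
  "(\<Sum>j<4 * 3 ^ (m + 1). sin (of_int k * th m (int j))) = 0"
  unfolding argT by (rule CS_sum, simp)+

lemma small_dvd:
  fixes x :: int and n :: nat
  assumes "\<bar>x\<bar> < int n" "int n dvd x" shows "x = 0"
proof (rule ccontr)
  assume "x \<noteq> 0"
  then have "\<bar>int n\<bar> \<le> \<bar>x\<bar>" using assms(2) by (rule dvd_imp_le_int)
  then show False using assms(1) by simp
qed

lemma orth:
  assumes f: "f \<in> F0 m" and g: "g \<in> F0 m"
  defines "Nn \<equiv> (4::nat) * 3 ^ (m + 1)"
  shows "(\<Sum>j<Nn. cos (real f * th m (int j)) * cos (real g * th m (int j))) = (if f = g then real Nn / 2 else 0)"
    and "(\<Sum>j<Nn. sin (real f * th m (int j)) * sin (real g * th m (int j))) = (if f = g then real Nn / 2 else 0)"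
    and "(\<Sum>j<Nn. cos (real f * th m (int j)) * sin (real g * th m (int j))) = 0"
proof -
  have bf: "0 < f" "f \<le> 5 * 3 ^ m" and bg: "0 < g" "g \<le> 5 * 3 ^ m" using F0_bound[OF f] F0_bound[OF g] by auto
  have Nn: "Nn = 12 * 3 ^ m" unfolding Nn_def by simp
  have D: "int Nn dvd (int f - int g) \<longleftrightarrow> f = g"
  proof
    assume "int Nn dvd (int f - int g)"
    moreover have "\<bar>int f - int g\<bar> < int Nn" using bf bg Nn by linarith
    ultimately have "int f - int g = 0" using small_dvd by blast
    then show "f = g" by simp
  qed simp
  have P: "\<not> int Nn dvd (int f + int g)"
  proof
    assume "int Nn dvd (int f + int g)"
    moreover have "\<bar>int f + int g\<bar> < int Nn" using bf bg Nn by linarith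
    ultimately have "int f + int g = 0" using small_dvd by blast
    then show False using bf bg by simp
  qed
  define T where "T j = th m (int j)" for j
  have e1: "real f * T j - real g * T j = of_int (int f - int g) * T j" for j by (simp add: algebra_simps)
  have e2: "real f * T j + real g * T j = of_int (int f + int g) * T j" for j by (simp add: algebra_simps)
  have Cm: "(\<Sum>j<Nn. cos (of_int (int f - int g) * T j)) = (if f = g then real Nn else 0)"
    unfolding T_def Nn_def CSg using D unfolding Nn_def by simp
  have Cp: "(\<Sum>j<Nn. cos (of_int (int f + int g) * T j)) = 0"
    unfolding T_def Nn_def CSg using P unfolding Nn_def by simp
  have Sm: "(\<Sum>j<Nn. sin (of_int (int f - int g) * T j)) = 0" unfolding T_def Nn_def CSg ..
  have Sp: "(\<Sum>j<Nn. sin (of_int (int f + int g) * T j)) = 0" unfolding T_def Nn_def CSg ..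
  have "(\<Sum>j<Nn. cos (real f * T j) * cos (real g * T j)) =
        (\<Sum>j<Nn. cos (of_int (int f - int g) * T j)) / 2 + (\<Sum>j<Nn. cos (of_int (int f + int g) * T j)) / 2"
    unfolding cos_times_cos e1 e2 by (simp add: sum_divide_distrib sum.distrib add_divide_distrib)
  then show "(\<Sum>j<Nn. cos (real f * th m (int j)) * cos (real g * th m (int j))) = (if f = g then real Nn / 2 else 0)"
    unfolding T_def Cm[unfolded T_def] Cp[unfolded T_def] by (cases "f = g") simp_all
  have "(\<Sum>j<Nn. sin (real f * T j) * sin (real g * T j)) =
        (\<Sum>j<Nn. cos (of_int (int f - int g) * T j)) / 2 - (\<Sum>j<Nn. cos (of_int (int f + int g) * T j)) / 2"
    unfolding sin_times_sin e1 e2 by (simp add: sum_divide_distrib sum_subtractf diff_divide_distrib)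
  then show "(\<Sum>j<Nn. sin (real f * th m (int j)) * sin (real g * th m (int j))) = (if f = g then real Nn / 2 else 0)"
    unfolding T_def Cm[unfolded T_def] Cp[unfolded T_def] by (cases "f = g") simp_all
  have "(\<Sum>j<Nn. cos (real f * T j) * sin (real g * T j)) =
        (\<Sum>j<Nn. sin (of_int (int f + int g) * T j)) / 2 - (\<Sum>j<Nn. sin (of_int (int f - int g) * T j)) / 2"
    unfolding cos_times_sin e1 e2 by (simp add: sum_divide_distrib sum_subtractf diff_divide_distrib)
  then show "(\<Sum>j<Nn. cos (real f * th m (int j)) * sin (real g * th m (int j))) = 0"
    unfolding T_def Sm[unfolded T_def] Sp[unfolded T_def] by simp
qed

definition uvec :: "('n::finite \<Rightarrow> nat) \<Rightarrow> nat \<Rightarrow> real ^ 'n" where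
  "uvec idx f = (\<chi> i. if even (idx i mod 6) \<and> fr (idx i) = f then 1 else 0)"
definition vvec :: "('n::finite \<Rightarrow> nat) \<Rightarrow> nat \<Rightarrow> real ^ 'n" where
  "vvec idx f = (\<chi> i. if odd (idx i mod 6) \<and> fr (idx i) = f then 1 else 0)"

context
  fixes idx :: "'n::finite \<Rightarrow> nat" and m :: nat
  assumes bij: "bij_betw idx UNIV {..<6 * (m + 1)}"
begin

lemma idx_lt: "idx i < 6 * (m + 1)" using bij unfolding bij_betw_def by auto

lemma idx_surj: "k < 6 * (m + 1) \<Longrightarrow> \<exists>i. idx i = k"
  using bij unfolding bij_betw_def by (metis imageE lessThan_iff UNIV_I)

lemma Psi_expand:
  "Psi idx t = (\<Sum>f\<in>F0 m. cos (real f * t) *\<^sub>R uvec idx f + sin (real f * t) *\<^sub>R vvec idx f)"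
proof (subst vec_eq_iff, rule allI)
  fix i
  define k where "k = idx i"
  have kF: "fr k \<in> F0 m" unfolding k_def using fr_in[OF idx_lt] .
  have "(\<Sum>f\<in>F0 m. cos (real f * t) *\<^sub>R uvec idx f + sin (real f * t) *\<^sub>R vvec idx f) $ i
      = (\<Sum>f\<in>F0 m. if f = fr k then (if even (k mod 6) then cos (real f * t) else sin (real f * t)) else 0)"
    unfolding sum_component by (rule sum.cong) (auto simp: uvec_def vvec_def k_def)
  also have "\<dots> = (if even (k mod 6) then cos (real (fr k) * t) else sin (real (fr k) * t))"
    using kF finite_F0 by (simp add: sum.delta)
  also have "\<dots> = Psi idx t $ i" unfolding Psi_def k_def Psi_coord_fr by simp
  finally show "Psi idx t $ i = (\<Sum>f\<in>F0 m. cos (real f * t) *\<^sub>R uvec idx f + sin (real f * t) *\<^sub>R vvec idx f) $ i"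
    by simp
qed

definition W where "W = uvec idx ` F0 m \<union> vvec idx ` F0 m"

lemma S_span: "Psi idx ` A_set m \<subseteq> span W"
proof
  fix x assume "x \<in> Psi idx ` A_set m"
  then obtain t where x: "x = Psi idx t" by blast
  have "(\<Sum>f\<in>F0 m. cos (real f * t) *\<^sub>R uvec idx f + sin (real f * t) *\<^sub>R vvec idx f) \<in> span W"
  proof (rule span_sum)
    fix f assume "f \<in> F0 m"
    then have "uvec idx f \<in> W" "vvec idx f \<in> W" unfolding W_def by blast+
    then show "cos (real f * t) *\<^sub>R uvec idx f + sin (real f * t) *\<^sub>R vvec idx f \<in> span W"
      by (intro span_add span_mul span_base)
  qed
  then show "x \<in> span W" unfolding x Psi_expand .
qed

lemma grid_mem: "j < 4 * 3 ^ (m + 1) \<Longrightarrow> Psi idx (th m (int j)) \<in> Psi idx ` A_set m"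
  unfolding A_eq by (intro imageI) simp

lemma uv_span:
  assumes f: "f \<in> F0 m"
  shows "uvec idx f \<in> span (Psi idx ` A_set m)" "vvec idx f \<in> span (Psi idx ` A_set m)"
proof -
  define Nn :: nat where "Nn = 4 * 3 ^ (m + 1)"
  have Nn0: "real Nn > 0" unfolding Nn_def by simp
  define T where "T j = th m (int j)" for j
  have cu: "uvec idx f = (\<Sum>j<Nn. (2 / real Nn * cos (real f * T j)) *\<^sub>R Psi idx (T j))"
  proof (subst vec_eq_iff, rule allI)
    fix i
    define k where "k = idx i"
    have kF: "fr k \<in> F0 m" unfolding k_def using fr_in[OF idx_lt] .
    have "(\<Sum>j<Nn. (2 / real Nn * cos (real f * T j)) *\<^sub>R Psi idx (T j)) $ i
        = 2 / real Nn * (\<Sum>j<Nn. cos (real f * T j) * Psi_coord k (T j))"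
      unfolding sum_component by (simp add: Psi_def k_def sum_distrib_left algebra_simps)
    also have "\<dots> = uvec idx f $ i"
    proof (cases "even (k mod 6)")
      case True
      have "(\<Sum>j<Nn. cos (real f * T j) * Psi_coord k (T j)) = (\<Sum>j<Nn. cos (real f * T j) * cos (real (fr k) * T j))"
        using True by (simp add: Psi_coord_fr)
      also have "\<dots> = (if f = fr k then real Nn / 2 else 0)" unfolding T_def Nn_def by (rule orth(1)[OF f kF])
      finally show ?thesis using True Nn0 by (simp add: uvec_def k_def)
    next
      case False
      have "(\<Sum>j<Nn. cos (real f * T j) * Psi_coord k (T j)) = (\<Sum>j<Nn. cos (real f * T j) * sin (real (fr k) * T j))"
        using False by (simp add: Psi_coord_fr)
      also have "\<dots> = 0" unfolding T_def Nn_def by (rule orth(3)[OF f kF])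
      finally show ?thesis using False by (simp add: uvec_def k_def)
    qed
    finally show "uvec idx f $ i = (\<Sum>j<Nn. (2 / real Nn * cos (real f * T j)) *\<^sub>R Psi idx (T j)) $ i" by simp
  qed
  have cv: "vvec idx f = (\<Sum>j<Nn. (2 / real Nn * sin (real f * T j)) *\<^sub>R Psi idx (T j))"
  proof (subst vec_eq_iff, rule allI)
    fix i
    define k where "k = idx i"
    have kF: "fr k \<in> F0 m" unfolding k_def using fr_in[OF idx_lt] .
    have "(\<Sum>j<Nn. (2 / real Nn * sin (real f * T j)) *\<^sub>R Psi idx (T j)) $ i
        = 2 / real Nn * (\<Sum>j<Nn. sin (real f * T j) * Psi_coord k (T j))"
      unfolding sum_component by (simp add: Psi_def k_def sum_distrib_left algebra_simps)
    also have "\<dots> = vvec idx f $ i"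
    proof (cases "even (k mod 6)")
      case True
      have "(\<Sum>j<Nn. sin (real f * T j) * Psi_coord k (T j)) = (\<Sum>j<Nn. cos (real (fr k) * T j) * sin (real f * T j))"
        using True by (simp add: Psi_coord_fr mult.commute)
      also have "\<dots> = 0" unfolding T_def Nn_def by (rule orth(3)[OF kF f])
      finally show ?thesis using True by (simp add: vvec_def k_def)
    next
      case False
      have "(\<Sum>j<Nn. sin (real f * T j) * Psi_coord k (T j)) = (\<Sum>j<Nn. sin (real f * T j) * sin (real (fr k) * T j))"
        using False by (simp add: Psi_coord_fr)
      also have "\<dots> = (if f = fr k then real Nn / 2 else 0)" unfolding T_def Nn_def by (rule orth(2)[OF f kF])
      finally show ?thesis using False Nn0 by (simp add: vvec_def k_def)
    qed
    finally show "vvec idx f $ i = (\<Sum>j<Nn. (2 / real Nn * sin (real f * T j)) *\<^sub>R Psi idx (T j)) $ i" by simp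
  qed
  have mem: "Psi idx (T j) \<in> span (Psi idx ` A_set m)" if "j < Nn" for j
    unfolding T_def using grid_mem[of j] that Nn_def by (simp add: span_base)
  show "uvec idx f \<in> span (Psi idx ` A_set m)" unfolding cu
    by (rule span_sum) (use mem in \<open>simp add: span_mul\<close>)
  show "vvec idx f \<in> span (Psi idx ` A_set m)" unfolding cv
    by (rule span_sum) (use mem in \<open>simp add: span_mul\<close>)
qed

lemma inner_uv:
  "uvec idx f \<bullet> vvec idx g = 0"
  "f \<noteq> g \<Longrightarrow> uvec idx f \<bullet> uvec idx g = 0"
  "f \<noteq> g \<Longrightarrow> vvec idx f \<bullet> vvec idx g = 0"
  by (auto simp: inner_vec_def uvec_def vvec_def intro!: sum.neutral)

lemma uv_nz:
  assumes "f \<in> F0 m" shows "uvec idx f \<noteq> 0" "vvec idx f \<noteq> 0"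
proof -
  obtain k where k: "k < 6 * (m + 1)" "even (k mod 6)" "fr k = f" using coord_ex(1)[OF assms] by blast
  obtain i where i: "idx i = k" using idx_surj[OF k(1)] by blast
  have "uvec idx f $ i = 1" using k i by (simp add: uvec_def)
  then show "uvec idx f \<noteq> 0" by auto
  obtain k' where k': "k' < 6 * (m + 1)" "odd (k' mod 6)" "fr k' = f" using coord_ex(2)[OF assms] by blast
  obtain i' where i': "idx i' = k'" using idx_surj[OF k'(1)] by blast
  have "vvec idx f $ i' = 1" using k' i' by (simp add: vvec_def)
  then show "vvec idx f \<noteq> 0" by auto
qed

lemma W_orth: "pairwise orthogonal W"
  unfolding pairwise_def orthogonal_def
proof (intro ballI impI)
  fix x y assume x: "x \<in> W" and y: "y \<in> W" and ne: "x \<noteq> y"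
  show "x \<bullet> y = 0" using x y ne unfolding W_def
    by (elim UnE imageE; metis inner_uv inner_commute)
qed

lemma W_nz: "0 \<notin> W" unfolding W_def using uv_nz by auto

lemma card_W: "card W = 2 * card (F0 m)"
proof -
  have iu: "inj_on (uvec idx) (F0 m)"
  proof (rule inj_onI)
    fix f g assume f: "f \<in> F0 m" and g: "g \<in> F0 m" and e: "uvec idx f = uvec idx g"
    show "f = g"
    proof (rule ccontr)
      assume "f \<noteq> g"
      then have "uvec idx f \<bullet> uvec idx f = 0" using e inner_uv(2) by metis
      then show False using uv_nz(1)[OF f] by simp
    qed
  qed
  have iv: "inj_on (vvec idx) (F0 m)"
  proof (rule inj_onI)
    fix f g assume f: "f \<in> F0 m" and g: "g \<in> F0 m" and e: "vvec idx f = vvec idx g"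
    show "f = g"
    proof (rule ccontr)
      assume "f \<noteq> g"
      then have "vvec idx f \<bullet> vvec idx f = 0" using e inner_uv(3) by metis
      then show False using uv_nz(2)[OF f] by simp
    qed
  qed
  have d: "uvec idx ` F0 m \<inter> vvec idx ` F0 m = {}"
  proof (rule equals0I)
    fix x assume "x \<in> uvec idx ` F0 m \<inter> vvec idx ` F0 m"
    then obtain f g where f: "f \<in> F0 m" and "x = uvec idx f" "x = vvec idx g" by blast
    then have "uvec idx f \<bullet> uvec idx f = 0" using inner_uv(1)[of f g] by simp
    then show False using uv_nz(1)[OF f] by simp
  qed
  have "card W = card (uvec idx ` F0 m) + card (vvec idx ` F0 m)"
    unfolding W_def by (rule card_Un_disjoint[OF _ _ d]) (simp_all add: finite_F0)
  then show ?thesis using card_image[OF iu] card_image[OF iv] by simp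
qed

lemma dim_S: "dim (Psi idx ` A_set m) = 4 * m + 6"
proof -
  have fW: "finite W" unfolding W_def using finite_F0 by simp
  have "dim (Psi idx ` A_set m) \<le> card W" by (rule dim_le_card[OF S_span fW])
  moreover have "card W \<le> dim (span (Psi idx ` A_set m))"
  proof (rule independent_card_le_dim)
    show "W \<subseteq> span (Psi idx ` A_set m)" unfolding W_def using uv_span by blast
    show "independent W" by (rule pairwise_orthogonal_independent[OF W_orth W_nz])
  qed
  ultimately have "dim (Psi idx ` A_set m) = card W" by simp
  then show ?thesis using card_W card_F0 by simp
qed

lemma aff_dim_P: "aff_dim (convex hull (Psi idx ` A_set m)) = int (4 * m + 6)"
proof -
  define S where "S = Psi idx ` A_set m"
  define x where "x = Psi idx (th m 0)"
  have xS: "x \<in> S" unfolding x_def S_def using grid_in_S by blast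
  have mxS: "- x \<in> S" using xS S_sym[of idx m] unfolding S_def by blast
  have "midpoint x (- x) = 0" by (simp add: midpoint_def)
  then have "0 \<in> closed_segment x (- x)" using midpoint_in_closed_segment by metis
  also have "closed_segment x (- x) \<subseteq> convex hull S"
    unfolding segment_convex_hull using xS mxS by (intro hull_mono) blast
  also have "convex hull S \<subseteq> affine hull S" by (rule convex_hull_subset_affine_hull)
  finally have "0 \<in> affine hull S" .
  then have "aff_dim S = int (dim S)" by (rule aff_dim_zero)
  then show ?thesis unfolding aff_dim_convex_hull S_def dim_S by simp
qed

end

theorem theorem1p2:
  fixes m :: nat and idx :: "'n::finite \<Rightarrow> nat"
  assumes "bij_betw idx (UNIV :: 'n set) {..<6 * (m + 1)}"
  defines "P \<equiv> convex hull (Psi idx ` A_set m)"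
  shows "polytope P
    \<and> uminus ` P = P
    \<and> aff_dim P = int (4 * m + 6)
    \<and> {v. {v} exposed_face_of P} = Psi idx ` A_set m
    \<and> card (Psi idx ` A_set m) = 4 * 3 ^ (m + 1)
    \<and> (\<forall>t1 t2. t1 \<in> A_set m \<longrightarrow> t2 \<in> A_set m \<longrightarrow> t1 \<noteq> t2 \<longrightarrow>
           \<not> (\<exists>k::int. t1 = t2 + pi + 2 * pi * of_int k) \<longrightarrow>
           closed_segment (Psi idx t1) (Psi idx t2) exposed_face_of P \<and>
           aff_dim (closed_segment (Psi idx t1) (Psi idx t2)) = 1)"
proof -
  have bij: "bij_betw idx UNIV {..<6 * (m + 1)}" using assms(1) by simp
  have p1: "polytope P" unfolding P_def polytope_def using finite_A[of m] by blast
  have p2: "uminus ` P = P" unfolding P_def by (rule P_sym)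
  have p3: "aff_dim P = int (4 * m + 6)" unfolding P_def by (rule aff_dim_P[OF bij])
  have p4: "{v. {v} exposed_face_of P} = Psi idx ` A_set m" unfolding P_def by (rule vertices[OF bij])
  have p5: "card (Psi idx ` A_set m) = 4 * 3 ^ (m + 1)" by (rule card_S[OF bij])
  have p6: "\<forall>t1 t2. t1 \<in> A_set m \<longrightarrow> t2 \<in> A_set m \<longrightarrow> t1 \<noteq> t2 \<longrightarrow>
           \<not> (\<exists>k::int. t1 = t2 + pi + 2 * pi * of_int k) \<longrightarrow>
           closed_segment (Psi idx t1) (Psi idx t2) exposed_face_of P \<and>
           aff_dim (closed_segment (Psi idx t1) (Psi idx t2)) = 1"
    unfolding P_def using edges[OF bij] by blast
  show ?thesis using p1 p2 p3 p4 p5 p6 by blast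
qed

end
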